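(* Let $\{p_i\}_i$ be a probability distribution, $\{\rho^i_{AB}\}_i$ a family of states in $\mathcal{S}_{\leq}(\mathcal{H}_A\otimes\mathcal{H}_B)$, and $\tau_{AB}:=\sum_ip_i\,\rho^i_{AB}$. Then $H_{\max}(A|B)_\tau\geq\sum_ip_i\,H_{\max}(A|B)_{\rho^i}$.
   Context: Hilbert spaces finite-dimensional; $\mathcal{S}_=(\mathcal{H})$: normalized states; $\mathcal{S}_{\leq}(\mathcal{H})=\{\rho\geq0:0<\mathrm{tr}\,\rho\leq1\}$. Logs base 2. $H_{\min}(A|B)_\rho=\max_{\sigma_B\in\mathcal{S}_=(\mathcal{H}_B)}\sup\{\lambda : 2^{-\lambda}\mathbb{1}_A\otimes\sigma_B\geq\rho_{AB}\}$. $H_{\max}(A|B)_\rho:=-H_{\min}(A|C)_\rho$, where $\rho_{ABC}$ is any rank-one purification of $\rho_{AB}$ and $\rho_{AC}$ its marginal (independent of the choice of purification). *)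

theory Defs
  imports "Jordan_Normal_Form.Matrix"
begin

text \<open>Finite-dimensional Hilbert spaces H_A = C^dA, H_B = C^dB, H_C = C^dC.
  Operators are complex matrices; the composite A (x) B is indexed by a*dB + b.\<close>

definition psd :: "nat \<Rightarrow> complex mat \<Rightarrow> bool" where
  "psd n X \<longleftrightarrow> X \<in> carrier_mat n n \<and>
     (\<forall>v \<in> carrier_vec n.
        let q = (\<Sum>i<n. \<Sum>j<n. cnj (v $ i) * X $$ (i, j) * v $ j)
        in Im q = 0 \<and> Re q \<ge> 0)"

definition loewner_ge :: "nat \<Rightarrow> complex mat \<Rightarrow> complex mat \<Rightarrow> bool" where
  "loewner_ge n Y X \<longleftrightarrow> X \<in> carrier_mat n n \<and> Y \<in> carrier_mat n n \<and> psd n (Y - X)"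

definition mtrace :: "complex mat \<Rightarrow> complex" where
  "mtrace X = (\<Sum>i<dim_row X. X $$ (i, i))"

definition norm_state :: "nat \<Rightarrow> complex mat \<Rightarrow> bool" where
  "norm_state n X \<longleftrightarrow> psd n X \<and> mtrace X = 1"

definition subnorm_state :: "nat \<Rightarrow> complex mat \<Rightarrow> bool" where
  "subnorm_state n X \<longleftrightarrow> psd n X \<and> 0 < Re (mtrace X) \<and> Re (mtrace X) \<le> 1"

definition tensor_mat :: "nat \<Rightarrow> nat \<Rightarrow> complex mat \<Rightarrow> complex mat \<Rightarrow> complex mat" where
  "tensor_mat m n X Y = mat (m * n) (m * n)
     (\<lambda>(i, j). X $$ (i div n, j div n) * Y $$ (i mod n, j mod n))"

definition ptrace_right :: "nat \<Rightarrow> nat \<Rightarrow> complex mat \<Rightarrow> complex mat" where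
  "ptrace_right m n X = mat m m (\<lambda>(i, j). \<Sum>k<n. X $$ (i * n + k, j * n + k))"

text \<open>Partial trace over the middle factor B of A (x) B (x) C (index (a*dB+b)*dC+c),
  giving an operator on A (x) C (index a*dC+c).\<close>
definition ptrace_mid :: "nat \<Rightarrow> nat \<Rightarrow> nat \<Rightarrow> complex mat \<Rightarrow> complex mat" where
  "ptrace_mid dA dB dC X = mat (dA * dC) (dA * dC)
     (\<lambda>(i, j). \<Sum>b<dB. X $$ (((i div dC) * dB + b) * dC + i mod dC,
                               ((j div dC) * dB + b) * dC + j mod dC))"

definition ket_bra :: "complex vec \<Rightarrow> complex mat" where
  "ket_bra psi = mat (dim_vec psi) (dim_vec psi) (\<lambda>(i, j). psi $ i * cnj (psi $ j))"

definition Hmin :: "nat \<Rightarrow> nat \<Rightarrow> complex mat \<Rightarrow> real" where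
  "Hmin dA dB rho = Sup {lam. \<exists>sigma. norm_state dB sigma \<and>
       loewner_ge (dA * dB)
         (complex_of_real (2 powr (- lam)) \<cdot>\<^sub>m tensor_mat dA dB (1\<^sub>m dA) sigma) rho}"

definition purification :: "nat \<Rightarrow> nat \<Rightarrow> complex mat \<Rightarrow> nat \<Rightarrow> complex vec \<Rightarrow> bool" where
  "purification dA dB rho dC psi \<longleftrightarrow>
     psi \<in> carrier_vec (dA * dB * dC) \<and> ptrace_right (dA * dB) dC (ket_bra psi) = rho"

text \<open>H_max(A|B)_rho := - H_min(A|C)_rho for a purification rho_ABC of rho_AB
  (independent of the chosen purification; here one is chosen by Hilbert choice).\<close>
definition Hmax :: "nat \<Rightarrow> nat \<Rightarrow> complex mat \<Rightarrow> real" where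
  "Hmax dA dB rho =
     (let (dC, psi) = (SOME (dC, psi). purification dA dB rho dC psi)
      in - Hmin dA dC (ptrace_mid dA dB dC (ket_bra psi)))"

end

theory Submission
  imports Defs
begin

definition B :: "nat \<Rightarrow> complex mat \<Rightarrow> (nat \<Rightarrow> complex) \<Rightarrow> (nat \<Rightarrow> complex) \<Rightarrow> complex" where
  "B n X u w = (\<Sum>i<n. \<Sum>j<n. cnj (u i) * X $$ (i, j) * w j)"

abbreviation qf where "qf n X v \<equiv> B n X v v"

lemma psd_iff: "psd n X \<longleftrightarrow> X \<in> carrier_mat n n \<and> (\<forall>v. 0 \<le> qf n X v)"
proof
  assume a: "psd n X"
  show "X \<in> carrier_mat n n \<and> (\<forall>v. 0 \<le> qf n X v)"
  proof (intro conjI allI)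
    show "X \<in> carrier_mat n n" using a by (simp add: psd_def)
    fix v :: "nat \<Rightarrow> complex"
    have "vec n v \<in> carrier_vec n" by simp
    with a have "Im (\<Sum>i<n. \<Sum>j<n. cnj (vec n v $ i) * X $$ (i, j) * vec n v $ j) = 0 \<and>
       Re (\<Sum>i<n. \<Sum>j<n. cnj (vec n v $ i) * X $$ (i, j) * vec n v $ j) \<ge> 0"
      unfolding psd_def Let_def by blast
    moreover have "(\<Sum>i<n. \<Sum>j<n. cnj (vec n v $ i) * X $$ (i, j) * vec n v $ j) = qf n X v"
      unfolding B_def by (intro sum.cong refl) auto
    ultimately have "Im (qf n X v) = 0 \<and> Re (qf n X v) \<ge> 0" by metis
    then show "0 \<le> qf n X v" by (simp add: less_eq_complex_def)
  qed
next
  assume a: "X \<in> carrier_mat n n \<and> (\<forall>v. 0 \<le> qf n X v)"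
  have "\<forall>v\<in>carrier_vec n. Im (\<Sum>i<n. \<Sum>j<n. cnj (v $ i) * X $$ (i, j) * v $ j) = 0 \<and>
       Re (\<Sum>i<n. \<Sum>j<n. cnj (v $ i) * X $$ (i, j) * v $ j) \<ge> 0"
  proof
    fix v :: "complex vec" assume "v \<in> carrier_vec n"
    have "0 \<le> qf n X (\<lambda>i. v $ i)" using a by blast
    then show "Im (\<Sum>i<n. \<Sum>j<n. cnj (v $ i) * X $$ (i, j) * v $ j) = 0 \<and>
       Re (\<Sum>i<n. \<Sum>j<n. cnj (v $ i) * X $$ (i, j) * v $ j) \<ge> 0"
      unfolding B_def by (simp add: less_eq_complex_def)
  qed
  then show "psd n X" unfolding psd_def Let_def using a by blast
qed

definition ev :: "nat \<Rightarrow> nat \<Rightarrow> complex" where "ev k = (\<lambda>i. if i = k then 1 else 0)"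

lemma B_add_left: "B n X (\<lambda>i. u i + w i) z = B n X u z + B n X w z"
  unfolding B_def by (simp add: distrib_left distrib_right sum.distrib)
lemma B_add_right: "B n X z (\<lambda>i. u i + w i) = B n X z u + B n X z w"
  unfolding B_def by (simp add: distrib_left distrib_right sum.distrib)
lemma B_smult_left: "B n X (\<lambda>i. a * u i) z = cnj a * B n X u z"
  unfolding B_def by (simp add: sum_distrib_left mult_ac)
lemma B_smult_right: "B n X z (\<lambda>i. a * u i) = a * B n X z u"
  unfolding B_def by (simp add: sum_distrib_left mult_ac)
lemma B_ev_left: "k < n \<Longrightarrow> B n X (ev k) w = (\<Sum>j<n. X $$ (k, j) * w j)"
  unfolding B_def ev_def by (simp add: if_distrib if_distribR sum.If_cases cong: if_cong)
lemma B_ev_right: "k < n \<Longrightarrow> B n X u (ev k) = (\<Sum>i<n. cnj (u i) * X $$ (i, k))"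
  unfolding B_def ev_def by (simp add: if_distrib if_distribR sum.If_cases cong: if_cong)
lemma B_ev_ev: "k < n \<Longrightarrow> l < n \<Longrightarrow> B n X (ev k) (ev l) = X $$ (k, l)"
  by (simp add: B_ev_left) (simp add: ev_def if_distrib if_distribR sum.If_cases cong: if_cong)


lemma psd_carrier: "psd n X \<Longrightarrow> X \<in> carrier_mat n n" by (simp add: psd_def)
lemma psd_qf: "psd n X \<Longrightarrow> 0 \<le> qf n X v" by (simp add: psd_iff)

lemma psd_diag: assumes "psd n X" "i < n" shows "0 \<le> X $$ (i, i)"
  using psd_qf[OF assms(1), of "ev i"] B_ev_ev[OF assms(2) assms(2)] by simp

lemma psd_herm: assumes "psd n X" "i < n" "j < n" shows "X $$ (j, i) = cnj (X $$ (i, j))"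
proof -
  have q1: "0 \<le> qf n X (\<lambda>k. ev i k + ev j k)" by (rule psd_qf[OF assms(1)])
  have q2: "0 \<le> qf n X (\<lambda>k. ev i k + \<i> * ev j k)" by (rule psd_qf[OF assms(1)])
  have e1: "qf n X (\<lambda>k. ev i k + ev j k) = X$$(i,i) + X$$(i,j) + X$$(j,i) + X$$(j,j)"
    by (simp only: B_add_left B_add_right B_ev_ev assms) simp
  have e2: "qf n X (\<lambda>k. ev i k + \<i> * ev j k) = X$$(i,i) + \<i> * X$$(i,j) - \<i> * X$$(j,i) + X$$(j,j)"
    by (simp only: B_add_left B_add_right B_smult_left B_smult_right B_ev_ev assms) simp
  have d1: "Im (X$$(i,i)) = 0" "Im (X$$(j,j)) = 0"
    using psd_diag[OF assms(1) assms(2)] psd_diag[OF assms(1) assms(3)] by (auto simp: less_eq_complex_def)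
  from q1 e1 d1 have "Im (X$$(i,j)) + Im (X$$(j,i)) = 0" by (simp add: less_eq_complex_def)
  moreover from q2 e2 d1 have "Re (X$$(i,j)) - Re (X$$(j,i)) = 0" by (simp add: less_eq_complex_def)
  ultimately show ?thesis by (intro complex_eqI) auto
qed

lemma psd_zero: assumes "psd n X" "i < n" "k < n" "X $$ (i, i) = 0" shows "X $$ (i, k) = 0"
proof (rule ccontr)
  assume nz: "X $$ (i, k) \<noteq> 0"
  define z where "z = X $$ (i, k)"
  define dr where "dr = Re (X $$ (k, k))"
  have dkk: "X $$ (k, k) = of_real dr" using psd_diag[OF assms(1) assms(3)]
    by (simp add: dr_def less_eq_complex_def complex_eq_iff)
  have hz: "X $$ (k, i) = cnj z" using psd_herm[OF assms(1) assms(2) assms(3)] z_def by simp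
  define r where "r = (dr + 1) / (2 * (cmod z)^2)"
  have cz: "cmod z > 0" using nz z_def by simp
  define s where "s = - (of_real r) * z"
  have "0 \<le> qf n X (\<lambda>l. s * ev i l + ev k l)" by (rule psd_qf[OF assms(1)])
  moreover have "qf n X (\<lambda>l. s * ev i l + ev k l) = cnj s * s * X$$(i,i) + cnj s * X$$(i,k) + s * X$$(k,i) + X$$(k,k)"
    by (simp only: B_add_left B_add_right B_smult_left B_smult_right B_ev_ev assms) (simp add: algebra_simps)
  moreover have "cnj s * s * X$$(i,i) + cnj s * X$$(i,k) + s * X$$(k,i) + X$$(k,k)
       = of_real (dr - 2 * r * (cmod z)^2)"
  proof -
    have zz: "cnj z * z = of_real ((cmod z)^2)" "z * cnj z = of_real ((cmod z)^2)"
      by (metis complex_norm_square mult.commute)+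
    have "cnj s * s * X$$(i,i) + cnj s * X$$(i,k) + s * X$$(k,i) + X$$(k,k)
       = - (of_real r) * (cnj z * z) - of_real r * (z * cnj z) + of_real dr"
      unfolding s_def using assms(4) hz dkk z_def[symmetric] by (simp add: algebra_simps)
    also have "\<dots> = of_real (dr - 2 * r * (cmod z)^2)" unfolding zz by simp
    finally show ?thesis .
  qed
  moreover have "dr - 2 * r * (cmod z)^2 = -1" unfolding r_def using cz by (simp add: field_simps)
  ultimately show False by (simp add: less_eq_complex_def)
qed

lemma B_minus: assumes "A \<in> carrier_mat n n" "C \<in> carrier_mat n n"
  shows "B n (A - C) u w = B n A u w - B n C u w"
  unfolding B_def using assms by (simp add: algebra_simps sum_subtractf)

lemma B_outer: "B n (mat n n (\<lambda>(i,j). c i * cnj (c j))) u w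
   = (\<Sum>i<n. cnj (u i) * c i) * cnj (\<Sum>j<n. cnj (w j) * c j)"
  unfolding B_def by (simp add: sum_distrib_left sum_distrib_right mult_ac, rule sum.swap)

lemma psd_schur:
  assumes "psd n X" "k < n" "X $$ (k, k) \<noteq> 0"
  defines "c \<equiv> (\<lambda>i. X $$ (i, k) / of_real (sqrt (Re (X $$ (k, k)))))"
  shows "psd n (X - mat n n (\<lambda>(i,j). c i * cnj (c j)))"
proof -
  have car: "X \<in> carrier_mat n n" using assms(1) by (simp add: psd_def)
  define dr where "dr = Re (X $$ (k, k))"
  have dkk: "X $$ (k, k) = of_real dr" using psd_diag[OF assms(1) assms(2)]
    by (simp add: dr_def less_eq_complex_def complex_eq_iff)
  have drpos: "dr > 0" using psd_diag[OF assms(1) assms(2)] assms(3) dkk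
    by (auto simp: less_eq_complex_def)
  show ?thesis unfolding psd_iff
  proof (intro conjI allI)
    show "X - mat n n (\<lambda>(i,j). c i * cnj (c j)) \<in> carrier_mat n n" by (rule minus_carrier_mat) simp
    fix v
    define \<beta> where "\<beta> = (\<Sum>i<n. cnj (v i) * X $$ (i, k))"
    define t where "t = - cnj \<beta> / of_real dr"
    have bl: "B n X (ev k) v = cnj \<beta>"
    proof -
      have "B n X (ev k) v = (\<Sum>j<n. X $$ (k, j) * v j)" by (rule B_ev_left[OF assms(2)])
      also have "\<dots> = (\<Sum>j<n. cnj (X $$ (j, k)) * v j)"
        by (intro sum.cong refl) (simp add: psd_herm[OF assms(1) _ assms(2)])
      finally show ?thesis by (simp add: \<beta>_def mult.commute)
    qed
    have br: "B n X v (ev k) = \<beta>" using B_ev_right[OF assms(2)] \<beta>_def by simp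
    have "0 \<le> qf n X (\<lambda>l. v l + t * ev k l)" by (rule psd_qf[OF assms(1)])
    moreover have "qf n X (\<lambda>l. v l + t * ev k l) = qf n X v + t * \<beta> + cnj t * cnj \<beta> + cnj t * t * of_real dr"
      by (simp only: B_add_left B_add_right B_smult_left B_smult_right B_ev_ev assms(2) bl br dkk) (simp add: algebra_simps)
    moreover have "qf n (X - mat n n (\<lambda>(i,j). c i * cnj (c j))) v = qf n X v - (\<beta> / of_real (sqrt dr)) * cnj (\<beta> / of_real (sqrt dr))"
    proof -
      have "(\<Sum>i<n. cnj (v i) * c i) = \<beta> / of_real (sqrt dr)"
        unfolding \<beta>_def c_def dr_def by (simp add: sum_divide_distrib)
      then show ?thesis by (simp add: B_minus[OF car] B_outer)
    qed
    moreover have "qf n X v + t * \<beta> + cnj t * cnj \<beta> + cnj t * t * of_real dr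
        = qf n X v - (\<beta> / of_real (sqrt dr)) * cnj (\<beta> / of_real (sqrt dr))"
    proof -
      have s2: "of_real (sqrt dr) * of_real (sqrt dr) = (of_real dr :: complex)"
        using drpos by (simp flip: of_real_mult)
      have h1: "(\<beta> / of_real (sqrt dr)) * cnj (\<beta> / of_real (sqrt dr)) = \<beta> * cnj \<beta> / of_real dr"
        using s2 by (simp add: field_simps)
      have h2: "t * \<beta> + cnj t * cnj \<beta> + cnj t * t * of_real dr = - (\<beta> * cnj \<beta> / of_real dr)"
        unfolding t_def using drpos by (simp add: field_simps)
      have "qf n X v + t * \<beta> + cnj t * cnj \<beta> + cnj t * t * of_real dr
          = qf n X v + (t * \<beta> + cnj t * cnj \<beta> + cnj t * t * of_real dr)" by (simp add: add.assoc)
      also have "\<dots> = qf n X v - \<beta> * cnj \<beta> / of_real dr" by (simp only: h2) simp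
      also have "\<dots> = qf n X v - (\<beta> / of_real (sqrt dr)) * cnj (\<beta> / of_real (sqrt dr))" by (simp only: h1)
      finally show ?thesis .
    qed
    ultimately show "0 \<le> qf n (X - mat n n (\<lambda>(i,j). c i * cnj (c j))) v" by simp
  qed
qed


lemma psd_factor_aux:
  "\<forall>X. psd n X \<and> card {i. i < n \<and> X $$ (i, i) \<noteq> 0} \<le> N \<longrightarrow>
     (\<exists>c. \<forall>i<n. \<forall>j<n. X $$ (i, j) = (\<Sum>k<N. c k i * cnj (c k j)))"
proof (induction N)
  case 0
  show ?case
  proof (intro allI impI)
    fix X assume a: "psd n X \<and> card {i. i < n \<and> X $$ (i, i) \<noteq> 0} \<le> 0"
    then have "{i. i < n \<and> X $$ (i, i) \<noteq> 0} = {}" by simp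
    then have "\<forall>i<n. \<forall>j<n. X $$ (i, j) = 0" using psd_zero a by blast
    then show "\<exists>c. \<forall>i<n. \<forall>j<n. X $$ (i, j) = (\<Sum>k<0. c k i * cnj (c k j))" by (intro exI[of _ "\<lambda>_ _. 0"]) simp
  qed
next
  case (Suc N)
  show ?case
  proof (intro allI impI)
    fix X assume a: "psd n X \<and> card {i. i < n \<and> X $$ (i, i) \<noteq> 0} \<le> Suc N"
    show "\<exists>c. \<forall>i<n. \<forall>j<n. X $$ (i, j) = (\<Sum>k<Suc N. c k i * cnj (c k j))"
    proof (cases "{i. i < n \<and> X $$ (i, i) \<noteq> 0} = {}")
      case True
      then have "\<forall>i<n. \<forall>j<n. X $$ (i, j) = 0" using psd_zero a by blast
      then show ?thesis by (intro exI[of _ "\<lambda>_ _. 0"]) simp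
    next
      case False
      then obtain k where k: "k < n" "X $$ (k, k) \<noteq> 0" by blast
      define c where "c = (\<lambda>i. X $$ (i, k) / of_real (sqrt (Re (X $$ (k, k)))))"
      define Y where "Y = X - mat n n (\<lambda>(i,j). c i * cnj (c j))"
      have car: "X \<in> carrier_mat n n" using a psd_carrier by blast
      have pY: "psd n Y" unfolding Y_def c_def by (rule psd_schur) (use a k in auto)
      have Yij: "Y $$ (i, j) = X $$ (i, j) - c i * cnj (c j)" if "i < n" "j < n" for i j
        unfolding Y_def using that by simp
      have Ykk: "Y $$ (k, k) = 0"
      proof -
        define dr where "dr = Re (X $$ (k, k))"
        have dkk: "X $$ (k, k) = of_real dr" using psd_diag[OF _ k(1)] a
          by (simp add: dr_def less_eq_complex_def complex_eq_iff)
        have "0 \<le> X $$ (k, k)" using psd_diag[OF _ k(1)] a by blast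
        then have drpos: "dr > 0" using k(2) dkk
          by (auto simp: less_eq_complex_def)
        have s2: "of_real (sqrt dr) * of_real (sqrt dr) = (of_real dr :: complex)"
          using drpos by (simp flip: of_real_mult)
        have "c k * cnj (c k) = X $$ (k, k)" unfolding c_def dr_def[symmetric] dkk
          using s2 drpos by (simp add: field_simps)
        then show ?thesis using Yij[OF k(1) k(1)] by simp
      qed
      have sub: "{i. i < n \<and> Y $$ (i, i) \<noteq> 0} \<subseteq> {i. i < n \<and> X $$ (i, i) \<noteq> 0} - {k}"
      proof
        fix i assume "i \<in> {i. i < n \<and> Y $$ (i, i) \<noteq> 0}"
        then have i: "i < n" "Y $$ (i, i) \<noteq> 0" by auto
        have "i \<noteq> k" using i Ykk by auto
        moreover have "X $$ (i, i) \<noteq> 0"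
        proof
          assume "X $$ (i, i) = 0"
          then have "X $$ (i, k) = 0" using psd_zero[of n X i k] a i k by blast
          then have "c i = 0" by (simp add: c_def)
          then show False using i Yij[OF i(1) i(1)] \<open>X $$ (i, i) = 0\<close> by simp
        qed
        ultimately show "i \<in> {i. i < n \<and> X $$ (i, i) \<noteq> 0} - {k}" using i by auto
      qed
      have "card {i. i < n \<and> Y $$ (i, i) \<noteq> 0} \<le> card ({i. i < n \<and> X $$ (i, i) \<noteq> 0} - {k})"
        by (rule card_mono[OF _ sub]) simp
      also have "\<dots> = card {i. i < n \<and> X $$ (i, i) \<noteq> 0} - 1" using k by (simp add: card_Diff_singleton)
      also have "\<dots> \<le> N" using a by linarith
      finally obtain d where d: "\<forall>i<n. \<forall>j<n. Y $$ (i, j) = (\<Sum>k<N. d k i * cnj (d k j))"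
        using Suc.IH pY by blast
      define c' where "c' = d(N := c)"
      have "\<forall>i<n. \<forall>j<n. X $$ (i, j) = (\<Sum>k<Suc N. c' k i * cnj (c' k j))"
      proof (intro allI impI)
        fix i j assume ij: "i < n" "j < n"
        have "(\<Sum>k<Suc N. c' k i * cnj (c' k j)) = (\<Sum>k<N. d k i * cnj (d k j)) + c i * cnj (c j)"
          by (simp add: c'_def)
        also have "\<dots> = X $$ (i, j)" using d Yij[OF ij] ij by (metis diff_add_cancel)
        finally show "X $$ (i, j) = (\<Sum>k<Suc N. c' k i * cnj (c' k j))" by simp
      qed
      then show ?thesis by blast
    qed
  qed
qed

lemma psd_factor: assumes "psd n X"
  shows "\<exists>c. \<forall>i<n. \<forall>j<n. X $$ (i, j) = (\<Sum>k<n. c k i * cnj (c k j))"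
proof -
  have "card {i. i < n \<and> X $$ (i, i) \<noteq> 0} \<le> n"
    using card_mono[of "{..<n}" "{i. i < n \<and> X $$ (i, i) \<noteq> 0}"] by auto
  then show ?thesis using psd_factor_aux[of n n] assms by blast
qed


definition ip :: "'a set \<Rightarrow> ('a \<Rightarrow> complex) \<Rightarrow> ('a \<Rightarrow> complex) \<Rightarrow> complex" where
  "ip K u w = (\<Sum>k\<in>K. u k * cnj (w k))"

lemma ip_cong: "(\<And>k. k \<in> K \<Longrightarrow> u k = u' k) \<Longrightarrow> (\<And>k. k \<in> K \<Longrightarrow> w k = w' k) \<Longrightarrow> ip K u w = ip K u' w'"
  unfolding ip_def by (intro sum.cong) auto

lemma ip_sum_left: "ip K (\<lambda>k. \<Sum>l\<in>L. a l * g l k) w = (\<Sum>l\<in>L. a l * ip K (g l) w)"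
  unfolding ip_def by (simp add: sum_distrib_right sum_distrib_left mult_ac, rule sum.swap)

lemma ip_sum_right: "ip K u (\<lambda>k. \<Sum>l\<in>L. a l * g l k) = (\<Sum>l\<in>L. cnj (a l) * ip K u (g l))"
  unfolding ip_def by (simp add: sum_distrib_right sum_distrib_left mult_ac, rule sum.swap)

lemma ip_diff_left: "ip K (\<lambda>k. u k - v k) w = ip K u w - ip K v w"
  unfolding ip_def by (simp add: algebra_simps sum_subtractf)
lemma ip_add_left: "ip K (\<lambda>k. u k + v k) w = ip K u w + ip K v w"
  unfolding ip_def by (simp add: algebra_simps sum.distrib)
lemma ip_diff_right: "ip K w (\<lambda>k. u k - v k) = ip K w u - ip K w v"
  unfolding ip_def by (simp add: algebra_simps sum_subtractf)
lemma ip_scale_left: "ip K (\<lambda>k. a * u k) w = a * ip K u w"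
  unfolding ip_def by (simp add: sum_distrib_left mult_ac)
lemma ip_scale_right: "ip K w (\<lambda>k. a * u k) = cnj a * ip K w u"
  unfolding ip_def by (simp add: sum_distrib_left mult_ac)
lemma ip_div_left: "ip K (\<lambda>k. u k / a) w = ip K u w / a"
  unfolding ip_def by (simp add: sum_divide_distrib)
lemma ip_div_right: "ip K w (\<lambda>k. u k / a) = ip K w u / cnj a"
  unfolding ip_def by (simp add: sum_divide_distrib)
lemma ip_cnj: "ip K w u = cnj (ip K u w)"
  unfolding ip_def by (simp add: mult.commute)

lemma ip_self: "ip K u u = of_real (\<Sum>k\<in>K. (cmod (u k))^2)"
  by (simp only: ip_def of_real_sum complex_norm_square)

lemma ip_self_zero: assumes "finite K" "ip K u u = 0" "k \<in> K" shows "u k = 0"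
proof -
  have "of_real (\<Sum>k\<in>K. (cmod (u k))^2) = (0::complex)" using assms(2) by (simp only: ip_self)
  then have "(\<Sum>k\<in>K. (cmod (u k))^2) = 0" by (simp only: of_real_eq_0_iff)
  then have "\<forall>k\<in>K. (cmod (u k))^2 = 0" using assms(1) by (subst (asm) sum_nonneg_eq_0_iff) auto
  then show ?thesis using assms(3) by simp
qed

lemma ip_self_Re: "Re (ip K u u) = (\<Sum>k\<in>K. (cmod (u k))^2)" "Im (ip K u u) = 0"
  by (simp_all add: ip_self)

lemma ip_self_nonneg: "Re (ip K u u) \<ge> 0"
  unfolding ip_self_Re by (simp add: sum_nonneg)


locale dg =
  fixes K :: "'k set" and J :: "'j set" and N :: nat
    and r :: "nat \<Rightarrow> 'k \<Rightarrow> complex" and s :: "nat \<Rightarrow> 'j \<Rightarrow> complex"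
  assumes fK: "finite K" and fJ: "finite J"
    and gram: "\<And>x y. x < N \<Longrightarrow> y < N \<Longrightarrow> ip K (r x) (r y) = ip J (s x) (s y)"
begin

definition cr :: "(nat \<Rightarrow> complex) \<Rightarrow> 'k \<Rightarrow> complex" where "cr g = (\<lambda>k. \<Sum>x<N. g x * r x k)"
definition cs :: "(nat \<Rightarrow> complex) \<Rightarrow> 'j \<Rightarrow> complex" where "cs g = (\<lambda>j. \<Sum>x<N. g x * s x j)"

lemma gram_comb: "ip J (cs g) (cs d) = ip K (cr g) (cr d)"
  unfolding cr_def cs_def ip_sum_left ip_sum_right using gram by (auto intro!: sum.cong)

lemma gram_row: "x < N \<Longrightarrow> ip J (s x) (cs d) = ip K (r x) (cr d)"
  unfolding cr_def cs_def ip_sum_right using gram by (auto intro!: sum.cong)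

lemma cr_div: "cr (\<lambda>x. g x / c) = (\<lambda>k. cr g k / c)"
  unfolding cr_def by (simp add: sum_divide_distrib)
lemma cs_div: "cs (\<lambda>x. g x / c) = (\<lambda>k. cs g k / c)"
  unfolding cs_def by (simp add: sum_divide_distrib)

lemma GS:
  "M \<le> N \<Longrightarrow> \<exists>(L::nat) \<beta>. (\<forall>l<L. \<forall>l'<L. ip K (cr (\<beta> l)) (cr (\<beta> l')) = (if l = l' then 1 else 0)) \<and>
     (\<forall>x<M. \<forall>k\<in>K. r x k = (\<Sum>l<L. ip K (r x) (cr (\<beta> l)) * cr (\<beta> l) k)) \<and>
     (\<forall>x<M. \<forall>j\<in>J. s x j = (\<Sum>l<L. ip K (r x) (cr (\<beta> l)) * cs (\<beta> l) j))"
proof (induction M)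
  case 0
  show ?case by (rule exI[of _ "0::nat"]) auto
next
  case (Suc M)
  then have MN: "M < N" by simp
  have MN': "M \<le> N" using MN by simp
  from Suc.IH[OF MN'] obtain L :: nat and \<beta> where
    on: "\<forall>l<L. \<forall>l'<L. ip K (cr (\<beta> l)) (cr (\<beta> l')) = (if l = l' then 1 else 0)" and
    rr: "\<forall>x<M. \<forall>k\<in>K. r x k = (\<Sum>l<L. ip K (r x) (cr (\<beta> l)) * cr (\<beta> l) k)" and
    ss: "\<forall>x<M. \<forall>j\<in>J. s x j = (\<Sum>l<L. ip K (r x) (cr (\<beta> l)) * cs (\<beta> l) j)"
    by blast
  define e where "e l = cr (\<beta> l)" for l
  define f where "f l = cs (\<beta> l)" for l
  define \<alpha> where "\<alpha> l = ip K (r M) (e l)" for l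
  define \<gamma> where "\<gamma> x = (if x = M then 1 else 0) - (\<Sum>l<L. \<alpha> l * \<beta> l x)" for x
  have crg: "cr \<gamma> k = r M k - (\<Sum>l<L. \<alpha> l * e l k)" for k
  proof -
    have "cr \<gamma> k = (\<Sum>x<N. (if x = M then 1 else 0) * r x k) - (\<Sum>x<N. (\<Sum>l<L. \<alpha> l * \<beta> l x) * r x k)"
      unfolding cr_def \<gamma>_def by (simp add: left_diff_distrib sum_subtractf)
    also have "(\<Sum>x<N. (if x = M then 1 else 0) * r x k) = (\<Sum>x<N. if x = M then r M k else 0)"
      by (intro sum.cong) auto
    also have "\<dots> = r M k" using MN by simp
    also have "(\<Sum>x<N. (\<Sum>l<L. \<alpha> l * \<beta> l x) * r x k) = (\<Sum>l<L. \<alpha> l * e l k)"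
      unfolding e_def cr_def sum_distrib_right sum_distrib_left by (subst sum.swap) (simp add: mult.assoc)
    finally show ?thesis .
  qed
  have csg: "cs \<gamma> j = s M j - (\<Sum>l<L. \<alpha> l * f l j)" for j
  proof -
    have "cs \<gamma> j = (\<Sum>x<N. (if x = M then 1 else 0) * s x j) - (\<Sum>x<N. (\<Sum>l<L. \<alpha> l * \<beta> l x) * s x j)"
      unfolding cs_def \<gamma>_def by (simp add: left_diff_distrib sum_subtractf)
    also have "(\<Sum>x<N. (if x = M then 1 else 0) * s x j) = (\<Sum>x<N. if x = M then s M j else 0)"
      by (intro sum.cong) auto
    also have "\<dots> = s M j" using MN by simp
    also have "(\<Sum>x<N. (\<Sum>l<L. \<alpha> l * \<beta> l x) * s x j) = (\<Sum>l<L. \<alpha> l * f l j)"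
      unfolding f_def cs_def sum_distrib_right sum_distrib_left by (subst sum.swap) (simp add: mult.assoc)
    finally show ?thesis .
  qed
  have sum_on: "(\<Sum>l'<L. c l' * ip K (e l') (e l)) = c l" if "l < L" for c l
  proof -
    have "(\<Sum>l'<L. c l' * ip K (e l') (e l)) = (\<Sum>l'<L. if l' = l then c l' else 0)"
      using on that unfolding e_def by (intro sum.cong) auto
    also have "\<dots> = c l" using that by simp
    finally show ?thesis .
  qed
  have orth: "ip K (cr \<gamma>) (e l) = 0" if "l < L" for l
  proof -
    have "ip K (cr \<gamma>) (e l) = ip K (\<lambda>k. r M k - (\<Sum>l<L. \<alpha> l * e l k)) (e l)"
      by (intro ip_cong) (simp_all add: crg)
    also have "\<dots> = \<alpha> l - (\<Sum>l'<L. \<alpha> l' * ip K (e l') (e l))"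
      by (simp add: ip_diff_left ip_sum_left \<alpha>_def)
    also have "\<dots> = 0" using sum_on[OF that] by simp
    finally show ?thesis .
  qed
  define \<nu>2 where "\<nu>2 = ip K (cr \<gamma>) (cr \<gamma>)"
  have \<nu>2J: "ip J (cs \<gamma>) (cs \<gamma>) = \<nu>2" unfolding \<nu>2_def by (rule gram_comb)
  have rM: "r M k = cr \<gamma> k + (\<Sum>l<L. \<alpha> l * e l k)" for k using crg by simp
  have sM: "s M j = cs \<gamma> j + (\<Sum>l<L. \<alpha> l * f l j)" for j using csg by simp
  show ?case
  proof (cases "\<nu>2 = 0")
    case True
    have z1: "cr \<gamma> k = 0" if "k \<in> K" for k using ip_self_zero[OF fK _ that] True \<nu>2_def by simp
    have z2: "cs \<gamma> j = 0" if "j \<in> J" for j using ip_self_zero[OF fJ _ that] True \<nu>2J by simp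
    show ?thesis
    proof (intro exI[of _ L] exI[of _ \<beta>] conjI)
      show "\<forall>l<L. \<forall>l'<L. ip K (cr (\<beta> l)) (cr (\<beta> l')) = (if l = l' then 1 else 0)" by (rule on)
      show "\<forall>x<Suc M. \<forall>k\<in>K. r x k = (\<Sum>l<L. ip K (r x) (cr (\<beta> l)) * cr (\<beta> l) k)"
        using rr rM z1 by (auto simp: less_Suc_eq \<alpha>_def e_def)
      show "\<forall>x<Suc M. \<forall>j\<in>J. s x j = (\<Sum>l<L. ip K (r x) (cr (\<beta> l)) * cs (\<beta> l) j)"
        using ss sM z2 by (auto simp: less_Suc_eq \<alpha>_def e_def f_def)
    qed
  next
    case False
    have im: "Im \<nu>2 = 0" unfolding \<nu>2_def by (rule ip_self_Re)
    have re0: "Re \<nu>2 \<ge> 0" unfolding \<nu>2_def by (rule ip_self_nonneg)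
    have repos: "Re \<nu>2 > 0" using False im re0 by (metis complex_eq_iff zero_complex.sel less_eq_real_def)
    define \<nu> where "\<nu> = sqrt (Re \<nu>2)"
    have nupos: "\<nu> > 0" using repos \<nu>_def by simp
    have nu2: "\<nu>2 = of_real \<nu> * of_real \<nu>"
      using repos im unfolding \<nu>_def by (simp add: complex_eq_iff flip: of_real_mult)
    define \<beta>' where "\<beta>' = \<beta>(L := (\<lambda>x. \<gamma> x / of_real \<nu>))"
    have eL: "cr (\<beta>' L) = (\<lambda>k. cr \<gamma> k / of_real \<nu>)" by (simp add: \<beta>'_def cr_div)
    have fL: "cs (\<beta>' L) = (\<lambda>k. cs \<gamma> k / of_real \<nu>)" by (simp add: \<beta>'_def cs_div)
    have bl: "\<beta>' l = \<beta> l" if "l < L" for l using that by (simp add: \<beta>'_def)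
    have LL: "ip K (cr (\<beta>' L)) (cr (\<beta>' L)) = 1"
      unfolding eL ip_div_left ip_div_right \<nu>2_def[symmetric] nu2 using nupos by simp
    have Ll: "ip K (cr (\<beta>' L)) (cr (\<beta>' l)) = 0" if "l < L" for l
      unfolding eL ip_div_left bl[OF that] using orth[OF that] by (simp add: e_def)
    have lL: "ip K (cr (\<beta>' l)) (cr (\<beta>' L)) = 0" if "l < L" for l
      using Ll[OF that] by (subst ip_cnj) simp
    have rxL: "ip K (r x) (cr (\<beta>' L)) = 0" if "x < M" for x
    proof -
      have "ip K (r x) (cr (\<beta>' L)) = ip K (\<lambda>k. \<Sum>l<L. ip K (r x) (cr (\<beta> l)) * cr (\<beta> l) k) (cr (\<beta>' L))"
        using rr that by (intro ip_cong) auto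
      also have "\<dots> = (\<Sum>l<L. ip K (r x) (cr (\<beta> l)) * ip K (cr (\<beta> l)) (cr (\<beta>' L)))"
        by (rule ip_sum_left)
      also have "\<dots> = 0" using lL bl by (intro sum.neutral) simp
      finally show ?thesis .
    qed
    have rML: "ip K (r M) (cr (\<beta>' L)) = of_real \<nu>"
    proof -
      have "ip K (r M) (cr (\<beta>' L)) = ip K (\<lambda>k. cr \<gamma> k + (\<Sum>l<L. \<alpha> l * e l k)) (cr (\<beta>' L))"
        by (intro ip_cong) (simp_all add: rM)
      also have "\<dots> = ip K (cr \<gamma>) (cr (\<beta>' L)) + (\<Sum>l<L. \<alpha> l * ip K (e l) (cr (\<beta>' L)))"
        by (simp add: ip_add_left ip_sum_left)
      also have "(\<Sum>l<L. \<alpha> l * ip K (e l) (cr (\<beta>' L))) = 0"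
        using lL bl by (intro sum.neutral) (simp add: e_def)
      also have "ip K (cr \<gamma>) (cr (\<beta>' L)) = of_real \<nu>"
        unfolding eL ip_div_right \<nu>2_def[symmetric] nu2 using nupos by simp
      finally show ?thesis by simp
    qed
    show ?thesis
    proof (intro exI[of _ "Suc L"] exI[of _ \<beta>'] conjI allI impI ballI)
      fix l l' assume "l < Suc L" "l' < Suc L"
      then show "ip K (cr (\<beta>' l)) (cr (\<beta>' l')) = (if l = l' then 1 else 0)"
        using on bl LL Ll lL by (auto simp: less_Suc_eq)
    next
      fix x k assume x: "x < Suc M" and k: "k \<in> K"
      show "r x k = (\<Sum>l<Suc L. ip K (r x) (cr (\<beta>' l)) * cr (\<beta>' l) k)"
      proof (cases "x < M")
        case True
        then show ?thesis using rr k rxL[OF True] bl by simp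
      next
        case False
        then have xM: "x = M" using x by simp
        have "(\<Sum>l<Suc L. ip K (r x) (cr (\<beta>' l)) * cr (\<beta>' l) k)
          = (\<Sum>l<L. \<alpha> l * e l k) + of_real \<nu> * (cr \<gamma> k / of_real \<nu>)"
          using xM rML eL bl by (simp add: \<alpha>_def e_def)
        also have "\<dots> = r x k" using xM rM nupos by simp
        finally show ?thesis by simp
      qed
    next
      fix x j assume x: "x < Suc M" and j: "j \<in> J"
      show "s x j = (\<Sum>l<Suc L. ip K (r x) (cr (\<beta>' l)) * cs (\<beta>' l) j)"
      proof (cases "x < M")
        case True
        then show ?thesis using ss j rxL[OF True] bl by simp
      next
        case False
        then have xM: "x = M" using x by simp
        have "(\<Sum>l<Suc L. ip K (r x) (cr (\<beta>' l)) * cs (\<beta>' l) j)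
          = (\<Sum>l<L. \<alpha> l * f l j) + of_real \<nu> * (cs \<gamma> j / of_real \<nu>)"
          using xM rML fL bl by (simp add: \<alpha>_def e_def f_def)
        also have "\<dots> = s x j" using xM sM nupos by simp
        finally show ?thesis by simp
      qed
    qed
  qed
qed

end

lemma on_comb:
  assumes "\<And>l l'. l < L \<Longrightarrow> l' < L \<Longrightarrow> ip A (g l) (g l') = (if l = l' then 1 else 0)"
  shows "ip A (\<lambda>a. \<Sum>l<(L::nat). \<alpha> l * g l a) (\<lambda>a. \<Sum>l<L. \<beta> l * g l a) = (\<Sum>l<L. \<alpha> l * cnj (\<beta> l))"
proof -
  have "ip A (\<lambda>a. \<Sum>l<L. \<alpha> l * g l a) (\<lambda>a. \<Sum>l<L. \<beta> l * g l a)
      = (\<Sum>l<L. \<alpha> l * (\<Sum>l'<L. cnj (\<beta> l') * ip A (g l) (g l')))"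
    by (simp add: ip_sum_left ip_sum_right)
  also have "\<dots> = (\<Sum>l<L. \<alpha> l * cnj (\<beta> l))"
  proof (intro sum.cong refl)
    fix l assume l: "l \<in> {..<L}"
    have "(\<Sum>l'<L. cnj (\<beta> l') * ip A (g l) (g l')) = (\<Sum>l'<L. if l' = l then cnj (\<beta> l') else 0)"
      using assms l by (intro sum.cong) auto
    also have "\<dots> = cnj (\<beta> l)" using l by simp
    finally show "\<alpha> l * (\<Sum>l'<L. cnj (\<beta> l') * ip A (g l) (g l')) = \<alpha> l * cnj (\<beta> l)" by simp
  qed
  finally show ?thesis .
qed

lemma on_comb_left:
  assumes "\<And>l l'. l < L \<Longrightarrow> l' < L \<Longrightarrow> ip A (g l) (g l') = (if l = l' then 1 else 0)"
  shows "ip A (\<lambda>a. \<Sum>l<(L::nat). \<alpha> l * g l a) u = (\<Sum>l<L. \<alpha> l * ip A (g l) u)"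
  by (simp add: ip_sum_left)

context dg begin

lemma douglas:
  "\<exists>T. (\<forall>x<N. \<forall>j\<in>J. s x j = (\<Sum>k\<in>K. T j k * r x k)) \<and>
       (\<forall>u. (\<Sum>j\<in>J. (cmod (\<Sum>k\<in>K. T j k * u k))^2) \<le> (\<Sum>k\<in>K. (cmod (u k))^2))"
proof -
  obtain L :: nat and \<beta> where
    on: "\<forall>l<L. \<forall>l'<L. ip K (cr (\<beta> l)) (cr (\<beta> l')) = (if l = l' then 1 else 0)" and
    rr: "\<forall>x<N. \<forall>k\<in>K. r x k = (\<Sum>l<L. ip K (r x) (cr (\<beta> l)) * cr (\<beta> l) k)" and
    ss: "\<forall>x<N. \<forall>j\<in>J. s x j = (\<Sum>l<L. ip K (r x) (cr (\<beta> l)) * cs (\<beta> l) j)"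
    using GS[of N] by blast
  define e where "e l = cr (\<beta> l)" for l
  define f where "f l = cs (\<beta> l)" for l
  have one: "\<And>l l'. l < L \<Longrightarrow> l' < L \<Longrightarrow> ip K (e l) (e l') = (if l = l' then 1 else 0)"
    using on e_def by simp
  have onf: "\<And>l l'. l < L \<Longrightarrow> l' < L \<Longrightarrow> ip J (f l) (f l') = (if l = l' then 1 else 0)"
    using on e_def f_def gram_comb by simp
  define T where "T j k = (\<Sum>l<L. f l j * cnj (e l k))" for j k
  have Tu: "(\<Sum>k\<in>K. T j k * u k) = (\<Sum>l<L. ip K u (e l) * f l j)" for j u
    unfolding T_def ip_def sum_distrib_right sum_distrib_left
    by (subst sum.swap) (simp add: mult_ac)
  show ?thesis
  proof (intro exI[of _ T] conjI allI impI ballI)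
    fix x j assume "x < N" "j \<in> J"
    then show "s x j = (\<Sum>k\<in>K. T j k * r x k)" unfolding Tu using ss e_def f_def by simp
  next
    fix u
    define \<alpha> where "\<alpha> l = ip K u (e l)" for l
    define S where "S = (\<Sum>l<L. \<alpha> l * cnj (\<alpha> l))"
    have "(\<Sum>j\<in>J. (cmod (\<Sum>k\<in>K. T j k * u k))^2) = Re (ip J (\<lambda>j. \<Sum>l<L. \<alpha> l * f l j) (\<lambda>j. \<Sum>l<L. \<alpha> l * f l j))"
      unfolding ip_self_Re Tu \<alpha>_def ..
    also have "\<dots> = Re S" unfolding S_def by (subst on_comb[OF onf]) auto
    finally have lhs: "(\<Sum>j\<in>J. (cmod (\<Sum>k\<in>K. T j k * u k))^2) = Re S" .
    define v where "v k = u k - (\<Sum>l<L. \<alpha> l * e l k)" for k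
    have c1: "ip K u (\<lambda>k. \<Sum>l<L. \<alpha> l * e l k) = S"
      unfolding ip_sum_right S_def \<alpha>_def by (simp add: mult.commute)
    have c2: "ip K (\<lambda>k. \<Sum>l<L. \<alpha> l * e l k) u = S"
    proof -
      have "ip K (\<lambda>k. \<Sum>l<L. \<alpha> l * e l k) u = (\<Sum>l<L. \<alpha> l * ip K (e l) u)" by (rule ip_sum_left)
      also have "\<dots> = S" unfolding S_def \<alpha>_def by (subst (2) ip_cnj) simp
      finally show ?thesis .
    qed
    have c3: "ip K (\<lambda>k. \<Sum>l<L. \<alpha> l * e l k) (\<lambda>k. \<Sum>l<L. \<alpha> l * e l k) = S"
      unfolding S_def by (rule on_comb[OF one])
    have "ip K v v = ip K u u - S"
      unfolding v_def by (simp add: ip_diff_left ip_diff_right c1 c2 c3)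
    then have "Re (ip K u u) - Re S \<ge> 0" using ip_self_nonneg[of K v] by simp
    then show "(\<Sum>j\<in>J. (cmod (\<Sum>k\<in>K. T j k * u k))^2) \<le> (\<Sum>k\<in>K. (cmod (u k))^2)"
      unfolding lhs using ip_self_Re(1)[of K u] by simp
  qed
qed

end

lemma sum_split: "(\<Sum>i<(A::nat)*M. g i) = (\<Sum>a<A. \<Sum>c<M. g (a*M + c))"
proof -
  have "(\<Sum>i<A*M. g i) = (\<Sum>a<A. sum g {a*M..<a*M+M})" by (rule sum.nat_group[symmetric])
  also have "\<dots> = (\<Sum>a<A. \<Sum>c<M. g (a*M + c))"
  proof (rule sum.cong[OF refl])
    fix a assume "a \<in> {..<A}"
    have "sum g {0 + a*M..<M + a*M} = (\<Sum>c\<in>{0..<M}. g (c + a*M))" by (rule sum.shift_bounds_nat_ivl)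
    then show "sum g {a*M..<a*M+M} = (\<Sum>c<M. g (a*M + c))" by (simp add: atLeast0LessThan add.commute)
  qed
  finally show ?thesis .
qed

lemma idx_lt: "a < A \<Longrightarrow> c < M \<Longrightarrow> a*M + c < A*(M::nat)"
proof -
  assume "a < A" "c < M"
  then have "a*M + c < a*M + M" by simp
  also have "\<dots> = Suc a * M" by simp
  also have "\<dots> \<le> A * M" using \<open>a < A\<close> by (intro mult_right_mono) auto
  finally show ?thesis .
qed

lemma idx_lt3: "a < A \<Longrightarrow> b < Bd \<Longrightarrow> c < M \<Longrightarrow> (a*Bd + b)*M + c < A*Bd*(M::nat)"
  by (intro idx_lt) auto

lemma B_smult: "X \<in> carrier_mat n n \<Longrightarrow> B n (a \<cdot>\<^sub>m X) u w = a * B n X u w"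
  unfolding B_def by (simp add: sum_distrib_left mult_ac)

lemma B_tensor:
  assumes "\<sigma> \<in> carrier_mat M M"
  shows "B (A*M) (tensor_mat A M (1\<^sub>m A) \<sigma>) u w = (\<Sum>a<A. B M \<sigma> (\<lambda>c. u (a*M+c)) (\<lambda>c. w (a*M+c)))"
proof -
  have "B (A*M) (tensor_mat A M (1\<^sub>m A) \<sigma>) u w
      = (\<Sum>a<A. \<Sum>c<M. \<Sum>a'<A. \<Sum>c'<M. cnj (u (a*M+c)) * ((if a = a' then 1 else 0) * \<sigma> $$ (c, c')) * w (a'*M+c'))"
    unfolding B_def sum_split tensor_mat_def
    by (intro sum.cong refl) (simp add: idx_lt)
  also have "\<dots> = (\<Sum>a<A. \<Sum>c<M. \<Sum>a'<A. if a' = a then (\<Sum>c'<M. cnj (u (a*M+c)) * \<sigma> $$ (c, c') * w (a*M+c')) else 0)"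
    by (intro sum.cong refl) auto
  also have "\<dots> = (\<Sum>a<A. B M \<sigma> (\<lambda>c. u (a*M+c)) (\<lambda>c. w (a*M+c)))"
    unfolding B_def by simp
  finally show ?thesis .
qed

lemma B_outer_sum:
  assumes "X \<in> carrier_mat n n" "\<And>i j. i < n \<Longrightarrow> j < n \<Longrightarrow> X $$ (i, j) = (\<Sum>b<Bd. w b i * cnj (w b j))"
  shows "B n X u v = (\<Sum>b<Bd. (\<Sum>i<n. cnj (u i) * w b i) * cnj (\<Sum>j<n. cnj (v j) * w b j))"
proof -
  have "B n X u v = (\<Sum>i<n. \<Sum>j<n. \<Sum>b<Bd. cnj (u i) * w b i * (cnj (w b j) * v j))"
    unfolding B_def using assms(2) by (simp add: sum_distrib_left sum_distrib_right mult_ac)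
  also have "\<dots> = (\<Sum>i<n. \<Sum>b<Bd. \<Sum>j<n. cnj (u i) * w b i * (cnj (w b j) * v j))"
    by (intro sum.cong refl) (rule sum.swap)
  also have "\<dots> = (\<Sum>b<Bd. \<Sum>i<n. \<Sum>j<n. cnj (u i) * w b i * (cnj (w b j) * v j))"
    by (rule sum.swap)
  also have "\<dots> = (\<Sum>b<Bd. (\<Sum>i<n. cnj (u i) * w b i) * cnj (\<Sum>j<n. cnj (v j) * w b j))"
    by (simp add: sum_distrib_left sum_distrib_right mult_ac)
  finally show ?thesis .
qed

lemma B_congr:
  assumes "Y \<in> carrier_mat n n" "\<And>d d'. d < n \<Longrightarrow> d' < n \<Longrightarrow> Y $$ (d, d') = (\<Sum>c<m. \<Sum>c'<m. V d c * X $$ (c, c') * cnj (V d' c'))"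
  shows "B n Y w w = B m X (\<lambda>c. \<Sum>d<n. cnj (V d c) * w d) (\<lambda>c. \<Sum>d<n. cnj (V d c) * w d)"
proof -
  have "B n Y w w = (\<Sum>d<n. \<Sum>d'<n. \<Sum>c<m. \<Sum>c'<m. cnj (w d) * V d c * X $$ (c, c') * (cnj (V d' c') * w d'))"
    unfolding B_def using assms(2) by (simp add: sum_distrib_left sum_distrib_right mult_ac)
  also have "\<dots> = (\<Sum>d<n. \<Sum>c<m. \<Sum>d'<n. \<Sum>c'<m. cnj (w d) * V d c * X $$ (c, c') * (cnj (V d' c') * w d'))"
    by (rule sum.cong[OF refl], rule sum.swap)
  also have "\<dots> = (\<Sum>c<m. \<Sum>d<n. \<Sum>d'<n. \<Sum>c'<m. cnj (w d) * V d c * X $$ (c, c') * (cnj (V d' c') * w d'))"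
    by (rule sum.swap)
  also have "\<dots> = (\<Sum>c<m. \<Sum>d<n. \<Sum>c'<m. \<Sum>d'<n. cnj (w d) * V d c * X $$ (c, c') * (cnj (V d' c') * w d'))"
    by (rule sum.cong[OF refl], rule sum.cong[OF refl], rule sum.swap)
  also have "\<dots> = (\<Sum>c<m. \<Sum>c'<m. \<Sum>d<n. \<Sum>d'<n. cnj (w d) * V d c * X $$ (c, c') * (cnj (V d' c') * w d'))"
    by (rule sum.cong[OF refl], rule sum.swap)
  also have "\<dots> = B m X (\<lambda>c. \<Sum>d<n. cnj (V d c) * w d) (\<lambda>c. \<Sum>d<n. cnj (V d c) * w d)"
    unfolding B_def by (simp add: sum_distrib_left sum_distrib_right mult_ac)
  finally show ?thesis .
qed


lemma idx_div: "x < (n::nat) \<Longrightarrow> (i*n + x) div n = i" by simp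
lemma idx_mod: "x < (n::nat) \<Longrightarrow> (i*n + x) mod n = x" by simp

lemma div_lt: "i < A * M \<Longrightarrow> i div M < (A::nat)" by (rule less_mult_imp_div_less)
lemma mod_lt: "i < A * M \<Longrightarrow> i mod M < (M::nat)"
  by (cases "M = 0") auto

lemma ptrace_right_entry:
  assumes "\<psi> \<in> carrier_vec (n*dC)" "i < n" "j < n"
  shows "ptrace_right n dC (ket_bra \<psi>) $$ (i,j) = (\<Sum>k<dC. \<psi> $ (i*dC+k) * cnj (\<psi> $ (j*dC+k)))"
  using assms unfolding ptrace_right_def ket_bra_def by (simp add: idx_lt)

definition wv :: "nat \<Rightarrow> nat \<Rightarrow> complex vec \<Rightarrow> nat \<Rightarrow> nat \<Rightarrow> complex" where
  "wv Bd M \<psi> b i = \<psi> $ (((i div M)*Bd + b)*M + i mod M)"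

lemma omega_entry:
  assumes "\<psi> \<in> carrier_vec (A*Bd*M)" "i < A*M" "j < A*M"
  shows "ptrace_mid A Bd M (ket_bra \<psi>) $$ (i,j) = (\<Sum>b<Bd. wv Bd M \<psi> b i * cnj (wv Bd M \<psi> b j))"
proof -
  have "((i div M)*Bd + b)*M + i mod M < A*Bd*M" "((j div M)*Bd + b)*M + j mod M < A*Bd*M" if "b < Bd" for b
    using idx_lt3[OF div_lt[OF assms(2)] that mod_lt[OF assms(2)]] idx_lt3[OF div_lt[OF assms(3)] that mod_lt[OF assms(3)]] by auto
  then show ?thesis using assms unfolding ptrace_mid_def ket_bra_def wv_def by simp
qed

lemma omega_carrier: "ptrace_mid A Bd M X \<in> carrier_mat (A*M) (A*M)"
  by (simp add: ptrace_mid_def)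

lemma B_omega:
  assumes "\<psi> \<in> carrier_vec (A*Bd*M)"
  shows "B (A*M) (ptrace_mid A Bd M (ket_bra \<psi>)) u v =
    (\<Sum>b<Bd. (\<Sum>i<A*M. cnj (u i) * wv Bd M \<psi> b i) * cnj (\<Sum>j<A*M. cnj (v j) * wv Bd M \<psi> b j))"
  by (rule B_outer_sum[OF omega_carrier omega_entry[OF assms]])

lemma purif_exists:
  assumes "psd (dA*dB) X"
  shows "\<exists>\<psi>. purification dA dB X (dA*dB) \<psi>"
proof -
  let ?n = "dA*dB"
  obtain c where c: "\<forall>i<?n. \<forall>j<?n. X $$ (i, j) = (\<Sum>k<?n. c k i * cnj (c k j))"
    using psd_factor[OF assms] by blast
  define \<psi> where "\<psi> = vec (?n*?n) (\<lambda>i. c (i mod ?n) (i div ?n))"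
  have car: "\<psi> \<in> carrier_vec (dA*dB*(dA*dB))" by (simp add: \<psi>_def)
  have Xc: "X \<in> carrier_mat ?n ?n" using assms psd_carrier by blast
  have "ptrace_right ?n ?n (ket_bra \<psi>) = X"
  proof (rule eq_matI)
    fix i j assume ij: "i < dim_row X" "j < dim_col X"
    then have ij': "i < ?n" "j < ?n" using Xc by auto
    have "ptrace_right ?n ?n (ket_bra \<psi>) $$ (i,j) = (\<Sum>k<?n. \<psi> $ (i*?n+k) * cnj (\<psi> $ (j*?n+k)))"
      by (rule ptrace_right_entry[OF car ij'])
    also have "\<dots> = (\<Sum>k<?n. c k i * cnj (c k j))"
      using ij' by (intro sum.cong refl) (simp add: \<psi>_def idx_lt idx_div idx_mod)
    also have "\<dots> = X $$ (i,j)" using c ij' by simp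
    finally show "ptrace_right ?n ?n (ket_bra \<psi>) $$ (i,j) = X $$ (i,j)" .
  qed (use Xc in \<open>auto simp: ptrace_right_def\<close>)
  then show ?thesis using car unfolding purification_def by blast
qed

lemma Hmax_char:
  assumes "psd (dA*dB) X"
  shows "\<exists>dC \<psi>. purification dA dB X dC \<psi> \<and> Hmax dA dB X = - Hmin dA dC (ptrace_mid dA dB dC (ket_bra \<psi>))"
proof -
  define P where "P = (SOME (dC, \<psi>). purification dA dB X dC \<psi>)"
  have "\<exists>q. (case q of (dC, \<psi>) \<Rightarrow> purification dA dB X dC \<psi>)"
    using purif_exists[OF assms] by auto
  then have "case P of (dC, \<psi>) \<Rightarrow> purification dA dB X dC \<psi>" unfolding P_def by (rule someI_ex)
  moreover have "Hmax dA dB X = (case P of (dC, \<psi>) \<Rightarrow> - Hmin dA dC (ptrace_mid dA dB dC (ket_bra \<psi>)))"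
    unfolding Hmax_def P_def by simp
  ultimately show ?thesis by (cases P) auto
qed

lemma trace_ptrace_right:
  assumes "\<psi> \<in> carrier_vec (A*Bd*M)"
  shows "mtrace (ptrace_right (A*Bd) M (ket_bra \<psi>)) = (\<Sum>a<A. \<Sum>b<Bd. \<Sum>k<M. \<psi> $ ((a*Bd+b)*M+k) * cnj (\<psi> $ ((a*Bd+b)*M+k)))"
proof -
  have "mtrace (ptrace_right (A*Bd) M (ket_bra \<psi>)) = (\<Sum>x<A*Bd. \<Sum>k<M. \<psi> $ (x*M+k) * cnj (\<psi> $ (x*M+k)))"
    unfolding mtrace_def using ptrace_right_entry[OF assms] by (simp add: ptrace_right_def)
  also have "\<dots> = (\<Sum>a<A. \<Sum>b<Bd. \<Sum>k<M. \<psi> $ ((a*Bd+b)*M+k) * cnj (\<psi> $ ((a*Bd+b)*M+k)))"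
    by (rule sum_split)
  finally show ?thesis .
qed

lemma trace_omega:
  assumes "\<psi> \<in> carrier_vec (A*Bd*M)"
  shows "mtrace (ptrace_mid A Bd M (ket_bra \<psi>)) = (\<Sum>a<A. \<Sum>b<Bd. \<Sum>k<M. \<psi> $ ((a*Bd+b)*M+k) * cnj (\<psi> $ ((a*Bd+b)*M+k)))"
proof -
  have "mtrace (ptrace_mid A Bd M (ket_bra \<psi>)) = (\<Sum>i<A*M. \<Sum>b<Bd. wv Bd M \<psi> b i * cnj (wv Bd M \<psi> b i))"
    unfolding mtrace_def using omega_entry[OF assms] by (simp add: ptrace_mid_def)
  also have "\<dots> = (\<Sum>a<A. \<Sum>k<M. \<Sum>b<Bd. \<psi> $ ((a*Bd+b)*M+k) * cnj (\<psi> $ ((a*Bd+b)*M+k)))"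
    unfolding sum_split by (simp add: wv_def)
  also have "\<dots> = (\<Sum>a<A. \<Sum>b<Bd. \<Sum>k<M. \<psi> $ ((a*Bd+b)*M+k) * cnj (\<psi> $ ((a*Bd+b)*M+k)))"
    by (rule sum.cong[OF refl], rule sum.swap)
  finally show ?thesis .
qed


definition HS :: "nat \<Rightarrow> nat \<Rightarrow> complex mat \<Rightarrow> real set" where
  "HS dA dC \<omega> = {lam. \<exists>sigma. norm_state dC sigma \<and>
       loewner_ge (dA * dC) (complex_of_real (2 powr (- lam)) \<cdot>\<^sub>m tensor_mat dA dC (1\<^sub>m dA) sigma) \<omega>}"

lemma Hmin_HS: "Hmin dA dC \<omega> = Sup (HS dA dC \<omega>)" by (simp add: Hmin_def HS_def)

lemma tensor_carrier: "tensor_mat A M X Y \<in> carrier_mat (A*M) (A*M)" by (simp add: tensor_mat_def)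

lemma mtrace_carrier: "X \<in> carrier_mat n n \<Longrightarrow> mtrace X = (\<Sum>i<n. X $$ (i,i))"
  by (simp add: mtrace_def)

lemma psd_trace_nonneg: "psd n Y \<Longrightarrow> 0 \<le> Re (mtrace Y)"
proof -
  assume a: "psd n Y"
  have "mtrace Y = (\<Sum>i<n. Y $$ (i,i))" using psd_carrier[OF a] by (rule mtrace_carrier)
  moreover have "0 \<le> (\<Sum>i<n. Y $$ (i,i))" using psd_diag[OF a] by (intro sum_nonneg) auto
  ultimately show ?thesis by (simp add: less_eq_complex_def)
qed

lemma trace_tensor: "\<sigma> \<in> carrier_mat M M \<Longrightarrow> mtrace (tensor_mat A M (1\<^sub>m A) \<sigma>) = of_nat A * mtrace \<sigma>"
proof -
  assume s: "\<sigma> \<in> carrier_mat M M"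
  have "mtrace (tensor_mat A M (1\<^sub>m A) \<sigma>) = (\<Sum>i<A*M. tensor_mat A M (1\<^sub>m A) \<sigma> $$ (i,i))"
    by (rule mtrace_carrier[OF tensor_carrier])
  also have "\<dots> = (\<Sum>a<A. \<Sum>c<M. tensor_mat A M (1\<^sub>m A) \<sigma> $$ (a*M+c,a*M+c))"
    by (rule sum_split)
  also have "\<dots> = (\<Sum>a<A. \<Sum>c<M. \<sigma> $$ (c,c))"
  proof (rule sum.cong[OF refl], rule sum.cong[OF refl])
    fix a c assume "a \<in> {..<A}" "c \<in> {..<M}"
    then have "a*M+c < A*M" "a < A" "c < M" by (auto intro: idx_lt)
    then show "tensor_mat A M (1\<^sub>m A) \<sigma> $$ (a*M+c,a*M+c) = \<sigma> $$ (c,c)"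
      unfolding tensor_mat_def by (simp add: idx_div idx_mod)
  qed
  also have "\<dots> = of_nat A * mtrace \<sigma>" using s by (simp add: mtrace_carrier)
  finally show ?thesis .
qed

lemma mtrace_minus: "X \<in> carrier_mat n n \<Longrightarrow> Y \<in> carrier_mat n n \<Longrightarrow> mtrace (X - Y) = mtrace X - mtrace Y"
proof -
  assume a: "X \<in> carrier_mat n n" "Y \<in> carrier_mat n n"
  have "mtrace (X - Y) = (\<Sum>i<n. (X - Y) $$ (i,i))" by (rule mtrace_carrier[OF minus_carrier_mat[OF a(2)]])
  also have "\<dots> = (\<Sum>i<n. X $$ (i,i) - Y $$ (i,i))" using a(2) by (intro sum.cong refl) auto
  also have "\<dots> = mtrace X - mtrace Y" using a by (simp add: mtrace_carrier sum_subtractf)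
  finally show ?thesis .
qed
lemma mtrace_smult: "X \<in> carrier_mat n n \<Longrightarrow> mtrace (a \<cdot>\<^sub>m X) = a * mtrace X"
proof -
  assume a: "X \<in> carrier_mat n n"
  have "mtrace (a \<cdot>\<^sub>m X) = (\<Sum>i<n. (a \<cdot>\<^sub>m X) $$ (i,i))" by (rule mtrace_carrier[OF smult_carrier_mat[OF a]])
  also have "\<dots> = (\<Sum>i<n. a * X $$ (i,i))" using a by (intro sum.cong refl) auto
  also have "\<dots> = a * mtrace X" using a by (simp add: mtrace_carrier sum_distrib_left)
  finally show ?thesis .
qed

lemma HS_bound:
  assumes "\<omega> \<in> carrier_mat (dA*dC) (dA*dC)" "lam \<in> HS dA dC \<omega>"
  shows "2 powr (- lam) * dA \<ge> Re (mtrace \<omega>)"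
proof -
  obtain \<sigma> where ns: "norm_state dC \<sigma>" and
    lg: "loewner_ge (dA*dC) (complex_of_real (2 powr (- lam)) \<cdot>\<^sub>m tensor_mat dA dC (1\<^sub>m dA) \<sigma>) \<omega>"
    using assms(2) unfolding HS_def by blast
  have sc: "\<sigma> \<in> carrier_mat dC dC" using ns psd_carrier unfolding norm_state_def by blast
  have p: "psd (dA*dC) (complex_of_real (2 powr (- lam)) \<cdot>\<^sub>m tensor_mat dA dC (1\<^sub>m dA) \<sigma> - \<omega>)"
    using lg unfolding loewner_ge_def by blast
  have "mtrace (complex_of_real (2 powr (- lam)) \<cdot>\<^sub>m tensor_mat dA dC (1\<^sub>m dA) \<sigma> - \<omega>)
      = complex_of_real (2 powr (- lam)) * (of_nat dA * 1) - mtrace \<omega>"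
    using ns sc assms(1)
    by (simp add: mtrace_minus[OF smult_carrier_mat[OF tensor_carrier] assms(1)] mtrace_smult[OF tensor_carrier] trace_tensor norm_state_def)
  with psd_trace_nonneg[OF p] show ?thesis by simp
qed

lemma HS_bdd:
  assumes "\<omega> \<in> carrier_mat (dA*dC) (dA*dC)" "Re (mtrace \<omega>) > 0"
  shows "bdd_above (HS dA dC \<omega>)"
proof (rule bdd_aboveI)
  fix lam assume l: "lam \<in> HS dA dC \<omega>"
  define t where "t = Re (mtrace \<omega>)"
  have b: "2 powr (- lam) * dA \<ge> t" using HS_bound[OF assms(1) l] t_def by simp
  have dA: "real dA > 0" using b assms(2) t_def
    by (cases "dA = 0") auto
  have "2 powr (- lam) \<ge> t / dA" using b dA by (simp add: field_simps)
  then have "log 2 (t / dA) \<le> log 2 (2 powr (- lam))"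
    using assms(2) dA t_def by (subst log_le_cancel_iff) auto
  then show "lam \<le> - log 2 (t / dA)" by simp
qed


lemma B_one: "B n (1\<^sub>m n) u w = (\<Sum>i<n. cnj (u i) * w i)"
proof -
  have "B n (1\<^sub>m n) u w = (\<Sum>i<n. \<Sum>j<n. if j = i then cnj (u i) * w i else 0)"
    unfolding B_def by (intro sum.cong refl) auto
  then show ?thesis by simp
qed

lemma mtrace_one: "mtrace (1\<^sub>m n) = (of_nat n :: complex)"
proof -
  have "mtrace (1\<^sub>m n) = (\<Sum>i<n. (1::complex))" unfolding mtrace_def by (intro sum.cong) auto
  then show ?thesis by simp
qed

lemma sum_cnj_self: "(\<Sum>i\<in>S. cnj (u i) * u i) = of_real (\<Sum>i\<in>S. (cmod (u i))^2)"
  unfolding of_real_sum by (rule sum.cong[OF refl]) (metis complex_norm_square mult.commute)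

lemma abs_le_sqrt_sum:
  assumes "i < (n::nat)" shows "cmod (u i) \<le> sqrt (\<Sum>i<n. (cmod (u i))^2)"
proof -
  have "(cmod (u i))^2 \<le> (\<Sum>i<n. (cmod (u i))^2)"
    using assms by (intro member_le_sum) auto
  then show ?thesis by (simp add: real_le_rsqrt)
qed

lemma HS_nonempty:
  assumes psi: "\<psi> \<in> carrier_vec (A*Bd*M)" and M: "M > 0"
  shows "\<exists>lam. lam \<in> HS A M (ptrace_mid A Bd M (ket_bra \<psi>))"
proof -
  define \<omega> where "\<omega> = ptrace_mid A Bd M (ket_bra \<psi>)"
  define \<sigma> where "\<sigma> = complex_of_real (1 / real M) \<cdot>\<^sub>m (1\<^sub>m M :: complex mat)"
  define T0 where "T0 = tensor_mat A M (1\<^sub>m A) \<sigma>"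
  define Q where "Q = (\<Sum>i<A*Bd*M. cmod (\<psi> $ i))"
  define C where "C = real M * (real Bd * (real A * real M * Q)^2 + 1)"
  have Q0: "Q \<ge> 0" unfolding Q_def by (simp add: sum_nonneg)
  have h0: "real Bd * (real A * real M * Q)^2 \<ge> 0" by simp
  have "real Bd * (real A * real M * Q)^2 + 1 > 0" using h0 by linarith
  then have Cpos: "C > 0" unfolding C_def using M by (intro mult_pos_pos) auto
  have sc: "\<sigma> \<in> carrier_mat M M" by (simp add: \<sigma>_def)
  have Bsig: "B M \<sigma> v v = of_real (1 / real M) * (\<Sum>i<M. cnj (v i) * v i)" for v
    unfolding \<sigma>_def by (simp add: B_smult B_one)
  have ns: "norm_state M \<sigma>"
    unfolding norm_state_def psd_iff
  proof (intro conjI allI)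
    show "\<sigma> \<in> carrier_mat M M" by (rule sc)
    fix v show "0 \<le> B M \<sigma> v v" unfolding Bsig sum_cnj_self
      by (simp add: less_eq_complex_def sum_nonneg)
  next
    show "mtrace \<sigma> = 1" unfolding \<sigma>_def using M
      by (simp add: mtrace_smult[of _ M] mtrace_one)
  qed
  have "loewner_ge (A*M) (complex_of_real C \<cdot>\<^sub>m T0) \<omega>"
    unfolding loewner_ge_def psd_iff
  proof (intro conjI allI)
    show "\<omega> \<in> carrier_mat (A*M) (A*M)" unfolding \<omega>_def by (rule omega_carrier)
    show "complex_of_real C \<cdot>\<^sub>m T0 \<in> carrier_mat (A*M) (A*M)" unfolding T0_def by (simp add: tensor_carrier)
    show "complex_of_real C \<cdot>\<^sub>m T0 - \<omega> \<in> carrier_mat (A*M) (A*M)"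
      unfolding \<omega>_def by (rule minus_carrier_mat[OF omega_carrier])
    fix u
    define U where "U = (\<Sum>i<A*M. (cmod (u i))^2)"
    have U0: "U \<ge> 0" unfolding U_def by (simp add: sum_nonneg)
    define z where "z b = (\<Sum>i<A*M. cnj (u i) * wv Bd M \<psi> b i)" for b
    have qT: "B (A*M) T0 u u = of_real (U / real M)"
    proof -
      have "B (A*M) T0 u u = (\<Sum>a<A. B M \<sigma> (\<lambda>c. u (a*M+c)) (\<lambda>c. u (a*M+c)))"
        unfolding T0_def by (rule B_tensor[OF sc])
      also have "\<dots> = of_real (1 / real M) * (\<Sum>a<A. \<Sum>c<M. cnj (u (a*M+c)) * u (a*M+c))"
        unfolding Bsig by (simp add: sum_distrib_left)
      also have "\<dots> = of_real (1 / real M) * (\<Sum>i<A*M. cnj (u i) * u i)" by (simp add: sum_split)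
      finally show ?thesis unfolding sum_cnj_self U_def by simp
    qed
    have qw: "B (A*M) \<omega> u u = of_real (\<Sum>b<Bd. (cmod (z b))^2)"
      unfolding \<omega>_def B_omega[OF psi] z_def[symmetric]
      unfolding of_real_sum by (rule sum.cong[OF refl]) (metis complex_norm_square)
    have zb: "cmod (z b) \<le> real A * real M * Q * sqrt U" if bB: "b < Bd" for b
    proof -
      have "cmod (z b) \<le> (\<Sum>i<A*M. cmod (u i) * cmod (wv Bd M \<psi> b i))"
        unfolding z_def by (rule order.trans[OF norm_sum]) (simp add: norm_mult)
      also have "\<dots> \<le> (\<Sum>i<A*M. sqrt U * Q)"
      proof (rule sum_mono)
        fix i assume i: "i \<in> {..<A*M}"
        have "cmod (u i) \<le> sqrt U" unfolding U_def using i by (intro abs_le_sqrt_sum) auto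
        moreover have "cmod (wv Bd M \<psi> b i) \<le> Q"
        proof -
          have "((i div M)*Bd + b)*M + i mod M < A*Bd*M"
            using i bB by (intro idx_lt3 div_lt mod_lt) auto
          then show ?thesis unfolding wv_def Q_def by (intro member_le_sum) auto
        qed
        ultimately show "cmod (u i) * cmod (wv Bd M \<psi> b i) \<le> sqrt U * Q"
          using U0 Q0 by (intro mult_mono) auto
      qed
      also have "\<dots> = real A * real M * Q * sqrt U" by simp
      finally show ?thesis .
    qed
    have sz: "(\<Sum>b<Bd. (cmod (z b))^2) \<le> real Bd * ((real A * real M * Q)^2 * U)"
    proof -
      have "(\<Sum>b<Bd. (cmod (z b))^2) \<le> of_nat (card {..<Bd}) * ((real A * real M * Q)^2 * U)"
      proof (rule sum_bounded_above)
        fix b assume "b \<in> {..<Bd}"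
        then have "(cmod (z b))^2 \<le> (real A * real M * Q * sqrt U)^2"
          using zb by (intro power_mono) auto
        also have "\<dots> = (real A * real M * Q)^2 * U" using U0 by (simp add: power_mult_distrib)
        finally show "(cmod (z b))^2 \<le> (real A * real M * Q)^2 * U" .
      qed
      then show ?thesis by simp
    qed
    have "B (A*M) (complex_of_real C \<cdot>\<^sub>m T0 - \<omega>) u u = of_real (C * (U / real M) - (\<Sum>b<Bd. (cmod (z b))^2))"
      unfolding \<omega>_def
      by (simp add: B_minus[OF smult_carrier_mat[OF tensor_carrier] omega_carrier] B_smult[OF tensor_carrier]
          qT[unfolded T0_def] qw[unfolded \<omega>_def] T0_def)
    moreover have "C * (U / real M) - (\<Sum>b<Bd. (cmod (z b))^2) \<ge> 0"
    proof -
      have "C * (U / real M) = (real Bd * (real A * real M * Q)^2 + 1) * U" unfolding C_def using M by simp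
      also have "\<dots> \<ge> real Bd * ((real A * real M * Q)^2 * U)" using U0 by (simp add: algebra_simps)
      finally show ?thesis using sz by linarith
    qed
    ultimately show "0 \<le> B (A*M) (complex_of_real C \<cdot>\<^sub>m T0 - \<omega>) u u" by (simp add: less_eq_complex_def)
  qed
  moreover have "2 powr (- (- log 2 C)) = C" using Cpos by simp
  ultimately have "- log 2 C \<in> HS A M \<omega>" unfolding HS_def T0_def using ns by auto
  then show ?thesis unfolding \<omega>_def by blast
qed


lemma B_cong: "(\<And>i. i < n \<Longrightarrow> u i = u' i) \<Longrightarrow> (\<And>i. i < n \<Longrightarrow> w i = w' i) \<Longrightarrow> B n X u w = B n X u' w'"
  unfolding B_def by (intro sum.cong) auto

definition congr_mat :: "nat \<Rightarrow> nat \<Rightarrow> (nat \<Rightarrow> nat \<Rightarrow> complex) \<Rightarrow> complex mat \<Rightarrow> complex mat" where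
  "congr_mat n' m V X = mat n' n' (\<lambda>(d,d'). \<Sum>c<m. \<Sum>c'<m. V d c * X $$ (c, c') * cnj (V d' c'))"

lemma B_congr_mat: "B n' (congr_mat n' m V X) w w = B m X (\<lambda>c. \<Sum>d<n'. cnj (V d c) * w d) (\<lambda>c. \<Sum>d<n'. cnj (V d c) * w d)"
  by (rule B_congr) (auto simp: congr_mat_def)

lemma psd_congr_mat: "psd m X \<Longrightarrow> psd n' (congr_mat n' m V X)"
  unfolding psd_iff B_congr_mat by (auto simp: congr_mat_def)

lemma psd_trace_cplx: "psd n Y \<Longrightarrow> mtrace Y = of_real (Re (mtrace Y))"
proof -
  assume a: "psd n Y"
  have "mtrace Y = (\<Sum>i<n. Y $$ (i,i))" using psd_carrier[OF a] by (rule mtrace_carrier)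
  moreover have "0 \<le> (\<Sum>i<n. Y $$ (i,i))" using psd_diag[OF a] by (intro sum_nonneg) auto
  ultimately show ?thesis by (simp add: less_eq_complex_def complex_eq_iff)
qed

lemma diag_congr:
  assumes "psd m \<sigma>"
    and that: "\<And>c c'. c < m \<Longrightarrow> c' < m \<Longrightarrow> \<sigma> $$ (c, c') = (\<Sum>k<m. g k c * cnj (g k c'))"
  shows "(\<Sum>c<m. \<Sum>c'<m. V c * \<sigma> $$ (c, c') * cnj (V c'))
     = of_real (\<Sum>k<m. (cmod (\<Sum>c<m. V c * g k c))^2)"
proof -
  have "(\<Sum>c<m. \<Sum>c'<m. V c * \<sigma> $$ (c, c') * cnj (V c')) = B m \<sigma> (\<lambda>c. cnj (V c)) (\<lambda>c. cnj (V c))"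
    unfolding B_def by simp
  also have "\<dots> = (\<Sum>k<m. (\<Sum>c<m. V c * g k c) * cnj (\<Sum>c<m. V c * g k c))"
    by (subst B_outer_sum[OF psd_carrier[OF assms(1)] that]) simp_all
  also have "\<dots> = of_real (\<Sum>k<m. (cmod (\<Sum>c<m. V c * g k c))^2)"
    unfolding of_real_sum by (rule sum.cong[OF refl]) (metis complex_norm_square)
  finally show ?thesis .
qed

lemma trace_contract:
  assumes ps: "psd m \<sigma>" and tr: "mtrace \<sigma> = 1" and fJ: "finite J"
    and con: "\<And>u. (\<Sum>j\<in>J. (cmod (\<Sum>c\<in>{..<m}. T j c * u c))^2) \<le> (\<Sum>c\<in>{..<m}. (cmod (u c))^2)"
  shows "(\<Sum>j\<in>J. Re (\<Sum>c<m. \<Sum>c'<m. T j c * \<sigma> $$ (c, c') * cnj (T j c'))) \<le> 1"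
proof -
  obtain g where g: "\<forall>i<m. \<forall>j<m. \<sigma> $$ (i, j) = (\<Sum>k<m. g k i * cnj (g k j))"
    using psd_factor[OF ps] by blast
  have "(\<Sum>j\<in>J. Re (\<Sum>c<m. \<Sum>c'<m. T j c * \<sigma> $$ (c, c') * cnj (T j c')))
      = (\<Sum>j\<in>J. \<Sum>k<m. (cmod (\<Sum>c<m. T j c * g k c))^2)"
  proof (rule sum.cong[OF refl])
    fix j
    have "(\<Sum>c<m. \<Sum>c'<m. T j c * \<sigma> $$ (c, c') * cnj (T j c')) = of_real (\<Sum>k<m. (cmod (\<Sum>c<m. T j c * g k c))^2)"
      using g by (intro diag_congr[OF ps]) auto
    then show "Re (\<Sum>c<m. \<Sum>c'<m. T j c * \<sigma> $$ (c, c') * cnj (T j c')) = (\<Sum>k<m. (cmod (\<Sum>c<m. T j c * g k c))^2)"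
      by (simp only: Re_complex_of_real)
  qed
  also have "\<dots> = (\<Sum>k<m. \<Sum>j\<in>J. (cmod (\<Sum>c<m. T j c * g k c))^2)" by (rule sum.swap)
  also have "\<dots> \<le> (\<Sum>k<m. \<Sum>c<m. (cmod (g k c))^2)"
    by (intro sum_mono) (use con in simp)
  also have "\<dots> = 1"
  proof -
    have "mtrace \<sigma> = (\<Sum>c<m. \<sigma> $$ (c,c))" using psd_carrier[OF ps] by (rule mtrace_carrier)
    also have "\<dots> = (\<Sum>c<m. \<Sum>k<m. g k c * cnj (g k c))" using g by simp
    also have "\<dots> = of_real (\<Sum>k<m. \<Sum>c<m. (cmod (g k c))^2)"
      unfolding of_real_sum by (subst sum.swap) (intro sum.cong refl, metis complex_norm_square)
    finally have "of_real (\<Sum>k<m. \<Sum>c<m. (cmod (g k c))^2) = (1::complex)" using tr by simp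
    then show ?thesis by (simp only: of_real_eq_1_iff)
  qed
  finally show ?thesis .
qed


lemma congr_carrier: "congr_mat n' m V X \<in> carrier_mat n' n'" by (simp add: congr_mat_def)

lemma core:
  fixes dA dB m n' :: nat and \<psi> \<phi> :: "complex vec" and \<sigma> :: "complex mat"
    and V :: "nat \<Rightarrow> nat \<Rightarrow> complex" and p C t :: real
  assumes psi: "\<psi> \<in> carrier_vec (dA*dB*m)" and phi: "\<phi> \<in> carrier_vec (dA*dB*n')"
    and sc: "\<sigma> \<in> carrier_mat m m"
    and Y: "psd (dA*m) (complex_of_real C \<cdot>\<^sub>m tensor_mat dA m (1\<^sub>m dA) \<sigma> - ptrace_mid dA dB m (ket_bra \<psi>))"
    and p: "p > 0" and t: "t > 0"
    and hT: "\<And>x d. x < dA*dB \<Longrightarrow> d < n' \<Longrightarrow> complex_of_real (sqrt p) * \<phi> $ (x*n'+d) = (\<Sum>c<m. V d c * \<psi> $ (x*m+c))"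
  shows "psd (dA*n') (complex_of_real (C * t / p) \<cdot>\<^sub>m tensor_mat dA n' (1\<^sub>m dA) (complex_of_real (1/t) \<cdot>\<^sub>m congr_mat n' m V \<sigma>)
            - ptrace_mid dA dB n' (ket_bra \<phi>))"
  unfolding psd_iff
proof (intro conjI allI)
  show "complex_of_real (C * t / p) \<cdot>\<^sub>m tensor_mat dA n' (1\<^sub>m dA) (complex_of_real (1/t) \<cdot>\<^sub>m congr_mat n' m V \<sigma>)
            - ptrace_mid dA dB n' (ket_bra \<phi>) \<in> carrier_mat (dA*n') (dA*n')"
    by (rule minus_carrier_mat[OF omega_carrier])
  fix v
  define u where "u x = (\<Sum>d<n'. cnj (V d (x mod m)) * v ((x div m)*n' + d))" for x
  define \<sigma>i where "\<sigma>i = congr_mat n' m V \<sigma>"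
  have uam: "u (a*m + c) = (\<Sum>d<n'. cnj (V d c) * v (a*n' + d))" if "c < m" for a c
    unfolding u_def using that by (simp add: idx_div idx_mod)
  have h1: "B (dA*n') (tensor_mat dA n' (1\<^sub>m dA) (complex_of_real (1/t) \<cdot>\<^sub>m \<sigma>i)) v v
      = complex_of_real (1/t) * B (dA*m) (tensor_mat dA m (1\<^sub>m dA) \<sigma>) u u"
  proof -
    have "B (dA*n') (tensor_mat dA n' (1\<^sub>m dA) (complex_of_real (1/t) \<cdot>\<^sub>m \<sigma>i)) v v
        = (\<Sum>a<dA. B n' (complex_of_real (1/t) \<cdot>\<^sub>m \<sigma>i) (\<lambda>d. v (a*n'+d)) (\<lambda>d. v (a*n'+d)))"
      by (rule B_tensor) (simp add: \<sigma>i_def congr_carrier)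
    also have "\<dots> = (\<Sum>a<dA. complex_of_real (1/t) * B n' \<sigma>i (\<lambda>d. v (a*n'+d)) (\<lambda>d. v (a*n'+d)))"
      by (simp add: B_smult[OF congr_carrier] \<sigma>i_def)
    also have "\<dots> = (\<Sum>a<dA. complex_of_real (1/t) * B m \<sigma> (\<lambda>c. u (a*m+c)) (\<lambda>c. u (a*m+c)))"
      unfolding \<sigma>i_def B_congr_mat by (intro sum.cong refl arg_cong2[where f="(*)"] B_cong) (simp_all add: uam)
    also have "\<dots> = complex_of_real (1/t) * B (dA*m) (tensor_mat dA m (1\<^sub>m dA) \<sigma>) u u"
      by (simp add: B_tensor[OF sc] sum_distrib_left)
    finally show ?thesis .
  qed
  define Z where "Z b = (\<Sum>x<dA*m. cnj (u x) * wv dB m \<psi> b x)" for b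
  define Z' where "Z' b = (\<Sum>y<dA*n'. cnj (v y) * wv dB n' \<phi> b y)" for b
  have hZ: "Z b = complex_of_real (sqrt p) * Z' b" if b: "b < dB" for b
  proof -
    have "Z b = (\<Sum>a<dA. \<Sum>c<m. cnj (u (a*m+c)) * \<psi> $ ((a*dB+b)*m + c))"
      unfolding Z_def sum_split wv_def by (intro sum.cong refl) (simp add: idx_div idx_mod)
    also have "\<dots> = (\<Sum>a<dA. \<Sum>c<m. \<Sum>d<n'. cnj (v (a*n'+d)) * (V d c * \<psi> $ ((a*dB+b)*m + c)))"
      by (intro sum.cong refl) (simp add: uam sum_distrib_right sum_distrib_left mult_ac)
    also have "\<dots> = (\<Sum>a<dA. \<Sum>d<n'. cnj (v (a*n'+d)) * (\<Sum>c<m. V d c * \<psi> $ ((a*dB+b)*m + c)))"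
      by (rule sum.cong[OF refl], subst sum.swap) (simp add: sum_distrib_left)
    also have "\<dots> = (\<Sum>a<dA. \<Sum>d<n'. cnj (v (a*n'+d)) * (complex_of_real (sqrt p) * \<phi> $ ((a*dB+b)*n' + d)))"
    proof (rule sum.cong[OF refl], rule sum.cong[OF refl])
      fix a d assume "a \<in> {..<dA}" "d \<in> {..<n'}"
      then have "a*dB+b < dA*dB" "d < n'" using b by (auto intro: idx_lt)
      then show "cnj (v (a*n'+d)) * (\<Sum>c<m. V d c * \<psi> $ ((a*dB+b)*m + c))
          = cnj (v (a*n'+d)) * (complex_of_real (sqrt p) * \<phi> $ ((a*dB+b)*n' + d))"
        using hT by simp
    qed
    also have "\<dots> = complex_of_real (sqrt p) * Z' b"
      unfolding Z'_def sum_split wv_def by (simp add: idx_div idx_mod sum_distrib_left mult_ac)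
    finally show ?thesis .
  qed
  have h2: "B (dA*m) (ptrace_mid dA dB m (ket_bra \<psi>)) u u = complex_of_real p * B (dA*n') (ptrace_mid dA dB n' (ket_bra \<phi>)) v v"
  proof -
    have "B (dA*m) (ptrace_mid dA dB m (ket_bra \<psi>)) u u = (\<Sum>b<dB. Z b * cnj (Z b))"
      unfolding B_omega[OF psi] Z_def ..
    also have "\<dots> = (\<Sum>b<dB. complex_of_real p * (Z' b * cnj (Z' b)))"
    proof (rule sum.cong[OF refl])
      fix b assume "b \<in> {..<dB}"
      then have "Z b = complex_of_real (sqrt p) * Z' b" using hZ by simp
      moreover have "complex_of_real (sqrt p) * complex_of_real (sqrt p) = complex_of_real p"
        using p by (simp flip: of_real_mult)
      ultimately show "Z b * cnj (Z b) = complex_of_real p * (Z' b * cnj (Z' b))"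
        by (simp add: mult_ac)
    qed
    also have "\<dots> = complex_of_real p * B (dA*n') (ptrace_mid dA dB n' (ket_bra \<phi>)) v v"
      unfolding B_omega[OF phi] Z'_def by (simp add: sum_distrib_left)
    finally show ?thesis .
  qed
  have "B (dA*n') (complex_of_real (C * t / p) \<cdot>\<^sub>m tensor_mat dA n' (1\<^sub>m dA) (complex_of_real (1/t) \<cdot>\<^sub>m \<sigma>i)
            - ptrace_mid dA dB n' (ket_bra \<phi>)) v v
      = complex_of_real (C * t / p) * (complex_of_real (1/t) * B (dA*m) (tensor_mat dA m (1\<^sub>m dA) \<sigma>) u u)
         - B (dA*n') (ptrace_mid dA dB n' (ket_bra \<phi>)) v v"
    by (simp only: B_minus[OF smult_carrier_mat[OF tensor_carrier] omega_carrier] B_smult[OF tensor_carrier] h1)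
  also have "\<dots> = complex_of_real (1/p) * (complex_of_real C * B (dA*m) (tensor_mat dA m (1\<^sub>m dA) \<sigma>) u u
        - B (dA*m) (ptrace_mid dA dB m (ket_bra \<psi>)) u u)"
    unfolding h2 using p t by (simp add: field_simps)
  also have "\<dots> = complex_of_real (1/p) * B (dA*m) (complex_of_real C \<cdot>\<^sub>m tensor_mat dA m (1\<^sub>m dA) \<sigma> - ptrace_mid dA dB m (ket_bra \<psi>)) u u"
    by (simp add: B_minus[OF smult_carrier_mat[OF tensor_carrier] omega_carrier] B_smult[OF tensor_carrier])
  finally have eq: "B (dA*n') (complex_of_real (C * t / p) \<cdot>\<^sub>m tensor_mat dA n' (1\<^sub>m dA) (complex_of_real (1/t) \<cdot>\<^sub>m \<sigma>i)
            - ptrace_mid dA dB n' (ket_bra \<phi>)) v v = complex_of_real (1/p) * B (dA*m) (complex_of_real C \<cdot>\<^sub>m tensor_mat dA m (1\<^sub>m dA) \<sigma> - ptrace_mid dA dB m (ket_bra \<psi>)) u u" .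
  have "0 \<le> B (dA*m) (complex_of_real C \<cdot>\<^sub>m tensor_mat dA m (1\<^sub>m dA) \<sigma> - ptrace_mid dA dB m (ket_bra \<psi>)) u u"
    using Y psd_qf by blast
  moreover have "(0::complex) \<le> complex_of_real (1/p)" using p by (simp add: less_eq_complex_def)
  ultimately show "0 \<le> B (dA*n') (complex_of_real (C * t / p) \<cdot>\<^sub>m tensor_mat dA n' (1\<^sub>m dA) (complex_of_real (1/t) \<cdot>\<^sub>m congr_mat n' m V \<sigma>)
            - ptrace_mid dA dB n' (ket_bra \<phi>)) v v"
    unfolding eq[unfolded \<sigma>i_def] by (metis mult_nonneg_nonneg)
qed


lemma purif_carrier: "purification dA dB X dC \<psi> \<Longrightarrow> \<psi> \<in> carrier_vec (dA*dB*dC)"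
  by (simp add: purification_def)

lemma trace_omega_eq:
  assumes "purification dA dB X dC \<psi>"
  shows "mtrace (ptrace_mid dA dB dC (ket_bra \<psi>)) = mtrace X"
proof -
  have c: "\<psi> \<in> carrier_vec (dA*dB*dC)" using assms by (simp add: purification_def)
  have "mtrace X = mtrace (ptrace_right (dA*dB) dC (ket_bra \<psi>))" using assms by (simp add: purification_def)
  then show ?thesis using trace_omega[OF c] trace_ptrace_right[OF c] by simp
qed

lemma hmin_upper:
  assumes "purification dA dB X dC \<psi>" "Re (mtrace X) > 0" "lam \<in> HS dA dC (ptrace_mid dA dB dC (ket_bra \<psi>))"
  shows "lam \<le> Hmin dA dC (ptrace_mid dA dB dC (ket_bra \<psi>))"
  unfolding Hmin_HS
  by (rule cSup_upper[OF assms(3) HS_bdd[OF omega_carrier]]) (use trace_omega_eq[OF assms(1)] assms(2) in simp)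

lemma psd_smult_real: "psd n X \<Longrightarrow> a \<ge> 0 \<Longrightarrow> psd n (complex_of_real a \<cdot>\<^sub>m X)"
  unfolding psd_iff by (auto simp: B_smult less_eq_complex_def intro!: mult_nonneg_nonneg)

lemma gibbs_term:
  fixes p t lam h :: real
  assumes "p > 0" "t > 0" "- log 2 (C * t / p) \<le> h" "C = 2 powr (- lam)"
  shows "p * lam + (p - t) / ln 2 \<le> p * h"
proof -
  have "- log 2 (C * t / p) = lam + log 2 p - log 2 t"
    using assms by (simp add: log_mult log_divide)
  with assms(3) have h1: "lam + log 2 p - log 2 t \<le> h" by simp
  have "ln (t / p) \<le> t / p - 1" using assms by (intro ln_le_minus_one) simp
  then have "p * ln (t / p) \<le> t - p" using assms(1) by (simp add: field_simps)
  then have "p * (ln t - ln p) \<le> t - p" using assms by (simp add: ln_div)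
  then have "p - t \<le> p * (ln p - ln t)" by (simp add: algebra_simps)
  then have "(p - t) / ln 2 \<le> p * (ln p - ln t) / ln 2" by (simp add: divide_right_mono)
  also have "p * (ln p - ln t) / ln 2 = p * (log 2 p - log 2 t)" by (simp add: log_def field_simps)
  finally have "(p - t) / ln 2 \<le> p * (log 2 p - log 2 t)" .
  also have "\<dots> \<le> p * (h - lam)" using h1 assms(1) by (intro mult_left_mono) auto
  finally show ?thesis by (simp add: algebra_simps)
qed


theorem lemma12:
  fixes I :: "'i set" and p :: "'i \<Rightarrow> real" and rho :: "'i \<Rightarrow> complex mat"
    and dA dB :: nat and tau :: "complex mat"
  assumes "finite I"
    and "\<forall>i\<in>I. p i \<ge> 0" and "(\<Sum>i\<in>I. p i) = 1"
    and "\<forall>i\<in>I. subnorm_state (dA * dB) (rho i)"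
    and "tau = mat (dA * dB) (dA * dB)
                 (\<lambda>(j, k). \<Sum>i\<in>I. complex_of_real (p i) * rho i $$ (j, k))"
  shows "Hmax dA dB tau \<ge> (\<Sum>i\<in>I. p i * Hmax dA dB (rho i))"
proof -
  note fI = assms(1) and p0 = assms(2) and p1 = assms(3) and tdef = assms(5)
  let ?n = "dA * dB"
  have psdr: "psd ?n (rho i)" if "i \<in> I" for i using assms(4) that by (simp add: subnorm_state_def)
  have trr: "Re (mtrace (rho i)) > 0" if "i \<in> I" for i using assms(4) that by (simp add: subnorm_state_def)
  obtain i0 where i0: "i0 \<in> I" "p i0 > 0"
  proof -
    have "\<exists>i\<in>I. p i > 0"
    proof (rule ccontr)
      assume "\<not> (\<exists>i\<in>I. p i > 0)"
      then have "\<forall>i\<in>I. p i = 0" using p0 by force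
      then show False using p1 by simp
    qed
    then show ?thesis using that by blast
  qed
  have tc: "tau \<in> carrier_mat ?n ?n" using tdef by simp
  have tij: "tau $$ (j, k) = (\<Sum>i\<in>I. complex_of_real (p i) * rho i $$ (j, k))" if "j < ?n" "k < ?n" for j k
    using tdef that by simp
  have psdt: "psd ?n tau"
    unfolding psd_iff
  proof (intro conjI allI)
    show "tau \<in> carrier_mat ?n ?n" by (rule tc)
    fix v
    have "B ?n tau v v = (\<Sum>j<?n. \<Sum>k<?n. \<Sum>i\<in>I. complex_of_real (p i) * (cnj (v j) * rho i $$ (j, k) * v k))"
      unfolding B_def using tij by (simp add: sum_distrib_left sum_distrib_right mult_ac)
    also have "\<dots> = (\<Sum>j<?n. \<Sum>i\<in>I. \<Sum>k<?n. complex_of_real (p i) * (cnj (v j) * rho i $$ (j, k) * v k))"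
      by (rule sum.cong[OF refl], rule sum.swap)
    also have "\<dots> = (\<Sum>i\<in>I. \<Sum>j<?n. \<Sum>k<?n. complex_of_real (p i) * (cnj (v j) * rho i $$ (j, k) * v k))"
      by (rule sum.swap)
    also have "\<dots> = (\<Sum>i\<in>I. complex_of_real (p i) * B ?n (rho i) v v)"
      unfolding B_def by (simp add: sum_distrib_left)
    finally have eq: "B ?n tau v v = (\<Sum>i\<in>I. complex_of_real (p i) * B ?n (rho i) v v)" .
    have "0 \<le> (\<Sum>i\<in>I. complex_of_real (p i) * B ?n (rho i) v v)"
    proof (rule sum_nonneg)
      fix i assume i: "i \<in> I"
      have "0 \<le> B ?n (rho i) v v" using psd_qf[OF psdr[OF i]] .
      moreover have "(0::complex) \<le> complex_of_real (p i)" using p0 i by (simp add: less_eq_complex_def)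
      ultimately show "0 \<le> complex_of_real (p i) * B ?n (rho i) v v" by (metis mult_nonneg_nonneg)
    qed
    then show "0 \<le> B ?n tau v v" using eq by simp
  qed
  have trt: "Re (mtrace tau) > 0"
  proof -
    have "mtrace tau = (\<Sum>x<?n. \<Sum>i\<in>I. complex_of_real (p i) * rho i $$ (x, x))"
      using tij by (simp add: mtrace_carrier[OF tc])
    also have "\<dots> = (\<Sum>i\<in>I. complex_of_real (p i) * mtrace (rho i))"
      by (subst sum.swap) (simp add: sum_distrib_left mtrace_carrier[OF psd_carrier[OF psdr]] cong: sum.cong)
    finally have "Re (mtrace tau) = (\<Sum>i\<in>I. p i * Re (mtrace (rho i)))" by simp
    also have "\<dots> \<ge> p i0 * Re (mtrace (rho i0))"
    proof (rule member_le_sum[OF i0(1) _ fI])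
      fix i assume "i \<in> I - {i0}"
      then show "0 \<le> p i * Re (mtrace (rho i))" using p0 trr[of i] by simp
    qed
    finally show ?thesis using i0 trr by (smt (verit) mult_pos_pos)
  qed
  obtain m \<psi> where purt: "purification dA dB tau m \<psi>"
    and Ht: "Hmax dA dB tau = - Hmin dA m (ptrace_mid dA dB m (ket_bra \<psi>))"
    using Hmax_char[OF psdt] by blast
  have "\<forall>i\<in>I. \<exists>q. purification dA dB (rho i) (fst q) (snd q) \<and>
      Hmax dA dB (rho i) = - Hmin dA (fst q) (ptrace_mid dA dB (fst q) (ket_bra (snd q)))"
    using Hmax_char psdr by fastforce
  from bchoice[OF this] obtain Q where Q: "\<forall>i\<in>I. purification dA dB (rho i) (fst (Q i)) (snd (Q i)) \<and>
      Hmax dA dB (rho i) = - Hmin dA (fst (Q i)) (ptrace_mid dA dB (fst (Q i)) (ket_bra (snd (Q i))))" by blast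
  define nC where "nC i = fst (Q i)" for i
  define \<phi> where "\<phi> i = snd (Q i)" for i
  have purr: "purification dA dB (rho i) (nC i) (\<phi> i)" if "i \<in> I" for i using Q that nC_def \<phi>_def by simp
  define \<omega> where "\<omega> i = ptrace_mid dA dB (nC i) (ket_bra (\<phi> i))" for i
  define h where "h i = Hmin dA (nC i) (\<omega> i)" for i
  have Hr: "Hmax dA dB (rho i) = - h i" if "i \<in> I" for i using Q that nC_def \<phi>_def h_def \<omega>_def by simp
  define \<omega>t where "\<omega>t = ptrace_mid dA dB m (ket_bra \<psi>)"
  have psic: "\<psi> \<in> carrier_vec (dA*dB*m)" using purt by (rule purif_carrier)
  have phic: "\<phi> i \<in> carrier_vec (dA*dB*nC i)" if "i \<in> I" for i using purr[OF that] by (rule purif_carrier)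
  have tpr: "tau = ptrace_right ?n m (ket_bra \<psi>)" using purt by (simp add: purification_def)
  have rpr: "rho i = ptrace_right ?n (nC i) (ket_bra (\<phi> i))" if "i \<in> I" for i
    using purr[OF that] by (simp add: purification_def)
  have mpos: "m > 0"
  proof (rule ccontr)
    assume "\<not> m > 0"
    then have "m = 0" by simp
    then have "mtrace tau = 0" unfolding tpr by (simp add: mtrace_def ptrace_right_def)
    then show False using trt by simp
  qed
  have key: "Hmin dA m \<omega>t \<le> (\<Sum>i\<in>I. p i * h i)"
    unfolding Hmin_HS
  proof (rule cSup_least)
    show "HS dA m \<omega>t \<noteq> {}" using HS_nonempty[OF psic mpos] \<omega>t_def by blast
    fix lam assume lam: "lam \<in> HS dA m \<omega>t"
    define C where "C = 2 powr (- lam)"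
    have Cpos: "C > 0" unfolding C_def by simp
    obtain \<sigma> where ns: "norm_state m \<sigma>" and
      lg: "loewner_ge (dA*m) (complex_of_real C \<cdot>\<^sub>m tensor_mat dA m (1\<^sub>m dA) \<sigma>) \<omega>t"
      using lam unfolding HS_def C_def by blast
    have psds: "psd m \<sigma>" and trs: "mtrace \<sigma> = 1" using ns by (auto simp: norm_state_def)
    have sc: "\<sigma> \<in> carrier_mat m m" using psd_carrier[OF psds] .
    have Yp: "psd (dA*m) (complex_of_real C \<cdot>\<^sub>m tensor_mat dA m (1\<^sub>m dA) \<sigma> - ptrace_mid dA dB m (ket_bra \<psi>))"
      using lg unfolding loewner_ge_def \<omega>t_def by blast
    define J where "J = Sigma I (\<lambda>i. {..<nC i})"
    define r where "r x c = \<psi> $ (x*m+c)" for x c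
    define s where "s x = (\<lambda>(i,d). complex_of_real (sqrt (p i)) * \<phi> i $ (x * nC i + d))" for x
    have fJ: "finite J" unfolding J_def using fI by simp
    have gram: "ip {..<m} (r x) (r y) = ip J (s x) (s y)" if xy: "x < ?n" "y < ?n" for x y
    proof -
      have "ip {..<m} (r x) (r y) = tau $$ (x, y)"
        unfolding ip_def r_def tpr using ptrace_right_entry[OF psic xy] by simp
      also have "\<dots> = (\<Sum>i\<in>I. complex_of_real (p i) * rho i $$ (x, y))" by (rule tij[OF xy])
      also have "\<dots> = (\<Sum>i\<in>I. \<Sum>d<nC i. s x (i,d) * cnj (s y (i,d)))"
      proof (rule sum.cong[OF refl])
        fix i assume i: "i \<in> I"
        have "rho i $$ (x, y) = (\<Sum>d<nC i. \<phi> i $ (x*nC i+d) * cnj (\<phi> i $ (y*nC i+d)))"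
          using ptrace_right_entry[OF phic[OF i] xy] rpr[OF i] by simp
        moreover have sq: "complex_of_real (sqrt (p i)) * complex_of_real (sqrt (p i)) = complex_of_real (p i)"
          using p0 i by (simp flip: of_real_mult)
        have "s x (i,d) * cnj (s y (i,d)) = (complex_of_real (sqrt (p i)) * complex_of_real (sqrt (p i))) *
            (\<phi> i $ (x*nC i+d) * cnj (\<phi> i $ (y*nC i+d)))" for d
          unfolding s_def by (simp add: mult_ac)
        then have "(\<Sum>d<nC i. s x (i,d) * cnj (s y (i,d))) = (\<Sum>d<nC i. complex_of_real (p i) *
            (\<phi> i $ (x*nC i+d) * cnj (\<phi> i $ (y*nC i+d))))" unfolding sq by simp
        ultimately show "complex_of_real (p i) * rho i $$ (x, y) = (\<Sum>d<nC i. s x (i,d) * cnj (s y (i,d)))"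
          by (simp add: sum_distrib_left)
      qed
      also have "\<dots> = ip J (s x) (s y)"
        unfolding ip_def J_def by (subst sum.Sigma) (use fI in auto)
      finally show ?thesis .
    qed
    interpret dg "{..<m}" J ?n r s
      by unfold_locales (use fJ gram in auto)
    obtain T where Ts: "\<forall>x<?n. \<forall>j\<in>J. s x j = (\<Sum>k\<in>{..<m}. T j k * r x k)"
      and Tc: "\<forall>u. (\<Sum>j\<in>J. (cmod (\<Sum>k\<in>{..<m}. T j k * u k))^2) \<le> (\<Sum>k\<in>{..<m}. (cmod (u k))^2)"
      using douglas by blast
    define V where "V i d c = T (i,d) c" for i d c
    define \<sigma>i where "\<sigma>i i = congr_mat (nC i) m (V i) \<sigma>" for i
    define t where "t i = Re (mtrace (\<sigma>i i))" for i
    have psdsi: "psd (nC i) (\<sigma>i i)" for i unfolding \<sigma>i_def by (rule psd_congr_mat[OF psds])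
    have t0: "t i \<ge> 0" for i unfolding t_def by (rule psd_trace_nonneg[OF psdsi])
    have trsi: "mtrace (\<sigma>i i) = complex_of_real (t i)" for i unfolding t_def by (rule psd_trace_cplx[OF psdsi])
    have tsum: "(\<Sum>i\<in>I. t i) \<le> 1"
    proof -
      have "t i = (\<Sum>d<nC i. Re (\<Sum>c<m. \<Sum>c'<m. T (i,d) c * \<sigma> $$ (c, c') * cnj (T (i,d) c')))" for i
      proof -
        have "mtrace (\<sigma>i i) = (\<Sum>d<nC i. (\<sigma>i i) $$ (d,d))" unfolding \<sigma>i_def by (rule mtrace_carrier[OF congr_carrier])
        also have "\<dots> = (\<Sum>d<nC i. \<Sum>c<m. \<Sum>c'<m. T (i,d) c * \<sigma> $$ (c, c') * cnj (T (i,d) c'))"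
          unfolding \<sigma>i_def congr_mat_def V_def by simp
        finally show ?thesis unfolding t_def by (simp add: Re_sum)
      qed
      then have "(\<Sum>i\<in>I. t i) = (\<Sum>j\<in>J. Re (\<Sum>c<m. \<Sum>c'<m. T j c * \<sigma> $$ (c, c') * cnj (T j c')))"
        unfolding J_def by (simp add: sum.Sigma[OF fI])
      also have "\<dots> \<le> 1" by (rule trace_contract[OF psds trs fJ]) (use Tc in blast)
      finally show ?thesis .
    qed
    have hT: "complex_of_real (sqrt (p i)) * \<phi> i $ (x * nC i + d) = (\<Sum>c<m. V i d c * \<psi> $ (x*m+c))"
      if "i \<in> I" "x < ?n" "d < nC i" for i x d
    proof -
      have "(i,d) \<in> J" unfolding J_def using that by simp
      then have "s x (i,d) = (\<Sum>k\<in>{..<m}. T (i,d) k * r x k)" using Ts that by blast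
      then show ?thesis unfolding s_def r_def V_def by simp
    qed
    have trm: "p i * lam + (p i - t i) / ln 2 \<le> p i * h i" if i: "i \<in> I" for i
    proof (cases "p i > 0")
      case False
      then have "p i = 0" using p0 i by force
      then show ?thesis using t0[of i] by (simp add: divide_nonpos_pos)
    next
      case True
      have ocar: "\<omega> i \<in> carrier_mat (dA * nC i) (dA * nC i)" unfolding \<omega>_def by (rule omega_carrier)
      have trw: "Re (mtrace (\<omega> i)) > 0" unfolding \<omega>_def trace_omega_eq[OF purr[OF i]] by (rule trr[OF i])
      have core_i: "psd (dA * nC i) (complex_of_real (C * tt / p i) \<cdot>\<^sub>m tensor_mat dA (nC i) (1\<^sub>m dA)
          (complex_of_real (1/tt) \<cdot>\<^sub>m \<sigma>i i) - \<omega> i)" if "tt > 0" for tt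
        unfolding \<omega>_def \<sigma>i_def
        by (rule core[OF psic phic[OF i] sc Yp True that]) (rule hT[OF i])
      have tpos: "t i > 0"
      proof -
        have "0 \<le> Re (mtrace (complex_of_real (C * 1 / p i) \<cdot>\<^sub>m tensor_mat dA (nC i) (1\<^sub>m dA)
          (complex_of_real (1/1) \<cdot>\<^sub>m \<sigma>i i) - \<omega> i))"
          by (rule psd_trace_nonneg[OF core_i]) simp
        also have "mtrace (complex_of_real (C * 1 / p i) \<cdot>\<^sub>m tensor_mat dA (nC i) (1\<^sub>m dA)
          (complex_of_real (1/1) \<cdot>\<^sub>m \<sigma>i i) - \<omega> i)
          = complex_of_real (C / p i) * (of_nat dA * complex_of_real (t i)) - mtrace (\<omega> i)"
          by (simp add: mtrace_minus[OF smult_carrier_mat[OF tensor_carrier] ocar] mtrace_smult[OF tensor_carrier]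
              trace_tensor[OF smult_carrier_mat[OF congr_carrier]] \<sigma>i_def mtrace_smult[OF congr_carrier] trsi[unfolded \<sigma>i_def])
        finally have "Re (mtrace (\<omega> i)) \<le> C / p i * dA * t i" by simp
        then show ?thesis using trw t0[of i] by (cases "t i = 0") auto
      qed
      have "- log 2 (C * t i / p i) \<in> HS dA (nC i) (\<omega> i)"
        unfolding HS_def
      proof (intro CollectI exI conjI)
        show "norm_state (nC i) (complex_of_real (1 / t i) \<cdot>\<^sub>m \<sigma>i i)"
          unfolding norm_state_def
          using psd_smult_real[OF psdsi, of "1 / t i"] tpos
          by (simp add: mtrace_smult[OF congr_carrier] \<sigma>i_def trsi[unfolded \<sigma>i_def] flip: of_real_mult)
        have pos: "C * t i / p i > 0" using Cpos tpos True by simp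
        show "loewner_ge (dA * nC i) (complex_of_real (2 powr - (- log 2 (C * t i / p i))) \<cdot>\<^sub>m
            tensor_mat dA (nC i) (1\<^sub>m dA) (complex_of_real (1 / t i) \<cdot>\<^sub>m \<sigma>i i)) (\<omega> i)"
          unfolding loewner_ge_def using core_i[OF tpos] pos ocar by (simp add: tensor_carrier)
      qed
      then have "- log 2 (C * t i / p i) \<le> h i"
        unfolding h_def \<omega>_def by (rule hmin_upper[OF purr[OF i] trr[OF i]])
      then show ?thesis using gibbs_term[OF True tpos _ C_def] by simp
    qed
    have "(\<Sum>i\<in>I. p i * lam + (p i - t i) / ln 2) = lam + (1 - (\<Sum>i\<in>I. t i)) / ln 2"
      using p1 by (simp add: sum.distrib sum_divide_distrib[symmetric] sum_subtractf sum_distrib_right[symmetric])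
    also have "\<dots> \<ge> lam" using tsum by simp
    finally show "lam \<le> (\<Sum>i\<in>I. p i * h i)"
      using sum_mono[of I "\<lambda>i. p i * lam + (p i - t i) / ln 2" "\<lambda>i. p i * h i"] trm by simp
  qed
  have "(\<Sum>i\<in>I. p i * Hmax dA dB (rho i)) = - (\<Sum>i\<in>I. p i * h i)"
    using Hr by (simp add: sum_negf[symmetric])
  then show ?thesis using key Ht \<omega>t_def by simp
qed


end
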